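(* Let $D$ be a digraph rooted at $r$ and let $w \in V(D) \setminus \{r\}$. Suppose that $I \in \mathcal{G}_D(w)$ is such that $I \cup \{f\} \in \mathcal{G}_D(w)$ for every $f \in \mathrm{in}_D(w) \setminus I$. Assume that there is an edge $uv \in E(D)$ with $u \neq r$ and $v \neq w$ for which $I \notin \mathcal{G}_{D - uv}(w)$. Then there exist a set $S \subseteq V(D) \setminus \{r\}$ containing $v$ and an $(r,S)$-path-system $\mathcal{P}$ with $V^+(\mathcal{P}) = S$ such that $S$ separates the tails of the edges in $\mathrm{in}_D(v) \setminus \{uv\}$ from $r$ (i.e. every directed path from $r$ to such a tail meets $S$). In particular, $uv$ is the last edge of some $P \in \mathcal{P}$.
   Context: Digraphs have no loops or parallel edges; $D - uv$ is $D$ with the edge $uv$ deleted. $\mathrm{in}_H(w)$ is the set of edges of $H$ with head $w$. An $(r,w)$-path-system is a set of pairwise internally disjoint directed paths from $r$ to $w$; $E^+(\mathcal{P})$ is the set of terminal edges of the paths in $\mathcal{P}$. $\mathcal{G}_H(w)$ is the set of all $I \subseteq \mathrm{in}_H(w)$ for which some $(r,w)$-path-system $\mathcal{P}$ in $H$ has $E^+(\mathcal{P}) = I$. An $(r,S)$-path is a directed path starting at $r$, ending in $S$, and internally disjoint from $S$; an $(r,S)$-path-system is a set of $(r,S)$-paths pairwise disjoint except at $r$. $V^+(\mathcal{P})$ is the set of terminal vertices of the paths in $\mathcal{P}$. *)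

theory Defs
  imports Main
begin

text \<open>A (finite) digraph is a vertex set V with an edge relation E \<subseteq> V \<times> V,
  without loops (parallel edges are impossible for a relation).\<close>
definition digraph :: "'a set \<Rightarrow> ('a \<times> 'a) set \<Rightarrow> bool" where
  "digraph V E \<longleftrightarrow> finite V \<and> E \<subseteq> V \<times> V \<and> (\<forall>x. (x, x) \<notin> E)"

definition dpath :: "'a set \<Rightarrow> ('a \<times> 'a) set \<Rightarrow> 'a list \<Rightarrow> bool" where
  "dpath V E p \<longleftrightarrow> p \<noteq> [] \<and> distinct p \<and> set p \<subseteq> V \<and>
     (\<forall>i. Suc i < length p \<longrightarrow> (p ! i, p ! Suc i) \<in> E)"

definition inner :: "'a list \<Rightarrow> 'a set" where
  "inner p = set (butlast (tl p))"

text \<open>Terminal edge of a path (meaningful when the path has at least 2 vertices).\<close>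
definition last_edge :: "'a list \<Rightarrow> 'a \<times> 'a" where
  "last_edge p = (p ! (length p - 2), last p)"

definition in_edges :: "('a \<times> 'a) set \<Rightarrow> 'a \<Rightarrow> ('a \<times> 'a) set" where
  "in_edges E w = {e \<in> E. snd e = w}"

definition rw_path_system :: "'a set \<Rightarrow> ('a \<times> 'a) set \<Rightarrow> 'a \<Rightarrow> 'a \<Rightarrow> 'a list set \<Rightarrow> bool" where
  "rw_path_system V E r w Ps \<longleftrightarrow>
     (\<forall>p\<in>Ps. dpath V E p \<and> hd p = r \<and> last p = w) \<and>
     (\<forall>p\<in>Ps. \<forall>q\<in>Ps. p \<noteq> q \<longrightarrow> inner p \<inter> inner q = {})"

text \<open>\<G>_H(w): sets of in-edges of w realised as terminal edges of an (r,w)-path-system.\<close>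
definition Gset :: "'a set \<Rightarrow> ('a \<times> 'a) set \<Rightarrow> 'a \<Rightarrow> 'a \<Rightarrow> ('a \<times> 'a) set set" where
  "Gset V E r w = {I. I \<subseteq> in_edges E w \<and>
      (\<exists>Ps. rw_path_system V E r w Ps \<and> last_edge ` Ps = I)}"

definition rS_path_system :: "'a set \<Rightarrow> ('a \<times> 'a) set \<Rightarrow> 'a \<Rightarrow> 'a set \<Rightarrow> 'a list set \<Rightarrow> bool" where
  "rS_path_system V E r S Ps \<longleftrightarrow>
     (\<forall>p\<in>Ps. dpath V E p \<and> hd p = r \<and> last p \<in> S \<and> inner p \<inter> S = {}) \<and>
     (\<forall>p\<in>Ps. \<forall>q\<in>Ps. p \<noteq> q \<longrightarrow> set p \<inter> set q \<subseteq> {r})"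

end

theory Submission
  imports Defs
begin

lemma last_take_Suc: "Suc j \<le> length p \<Longrightarrow> last (take (Suc j) p) = p ! j"
  by (simp add: take_Suc_conv_app_nth)

lemma chain_rtrancl:
  assumes "\<And>k. i \<le> k \<Longrightarrow> Suc k \<le> j \<Longrightarrow> (p!k, p!Suc k) \<in> R" "i \<le> j"
  shows "(p!i, p!j) \<in> R\<^sup>*"
  using assms
proof (induction j)
  case 0 then show ?case by simp
next
  case (Suc j)
  show ?case
  proof (cases "i = Suc j")
    case True then show ?thesis by simp
  next
    case False
    then have "(p!i, p!j) \<in> R\<^sup>*" using Suc by auto
    moreover have "(p!j, p!Suc j) \<in> R" using Suc False by auto
    ultimately show ?thesis by (rule rtrancl_into_rtrancl)
  qed
qed

lemma dpath_take:
  assumes "dpath V E p" "0 < m"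
  shows "dpath V E (take m p)"
  using assms unfolding dpath_def
  by (auto simp: set_take_subset[THEN subsetD] dest: in_set_takeD)

lemma dpath_drop:
  assumes "dpath V E p" "j < length p"
  shows "dpath V E (drop j p)"
  using assms unfolding dpath_def
  by (auto dest: in_set_dropD)

lemma dpath_append:
  assumes "dpath V E p" "dpath V E q" "set p \<inter> set q = {}" "(last p, hd q) \<in> E"
  shows "dpath V E (p @ q)"
  unfolding dpath_def
proof (intro conjI allI impI)
  show "p @ q \<noteq> []" using assms(1) by (simp add: dpath_def)
  show "distinct (p @ q)" using assms by (simp add: dpath_def)
  show "set (p @ q) \<subseteq> V" using assms by (simp add: dpath_def)
  fix i assume i: "Suc i < length (p @ q)"
  consider "Suc i < length p" | "Suc i = length p" | "Suc i > length p" by linarith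
  then show "((p @ q) ! i, (p @ q) ! Suc i) \<in> E"
  proof cases
    case 1 then show ?thesis using assms(1) by (simp add: dpath_def nth_append)
  next
    case 2
    have "length p - 1 = i" using 2 by simp
    then have "p ! i = last p" using assms(1) by (simp add: dpath_def last_conv_nth)
    moreover have "q ! 0 = hd q" using assms(2) by (simp add: dpath_def hd_conv_nth)
    ultimately show ?thesis using 2 assms(4) by (simp add: nth_append)
  next
    case 3
    then have "Suc (i - length p) < length q" using i by simp
    then have "(q ! (i - length p), q ! Suc (i - length p)) \<in> E" using assms(2) by (simp add: dpath_def)
    moreover have "Suc i - length p = Suc (i - length p)" using 3 by simp
    ultimately show ?thesis using 3 by (simp add: nth_append)
  qed
qed

lemma dpath_mono: "dpath V E p \<Longrightarrow> E \<subseteq> E' \<Longrightarrow> dpath V E' p"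
  unfolding dpath_def by blast

lemma dpath_rtrancl:
  assumes "p \<noteq> []" "\<And>k. Suc k < length p \<Longrightarrow> (p!k, p!Suc k) \<in> R"
  shows "(hd p, last p) \<in> R\<^sup>*"
proof -
  have "(p!0, p!(length p - 1)) \<in> R\<^sup>*"
    by (rule chain_rtrancl) (use assms in auto)
  then show ?thesis using assms(1) by (simp add: hd_conv_nth last_conv_nth)
qed

lemma normalize_path:
  assumes "dpath V E p" "hd p \<in> A" "last p \<in> B"
  shows "\<exists>q. dpath V E q \<and> set q \<subseteq> set p \<and> hd q \<in> A \<and> last q \<in> B \<and>
            set (tl q) \<inter> A = {} \<and> set (butlast q) \<inter> B = {}"
  using assms
proof (induction "length p" arbitrary: p rule: less_induct)
  case less
  show ?case
  proof (cases "set (tl p) \<inter> A = {}")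
    case False
    then obtain z where z: "z \<in> set (tl p)" "z \<in> A" by auto
    then obtain j where j: "j < length (tl p)" "tl p ! j = z" by (auto simp: in_set_conv_nth)
    have np: "p \<noteq> []" using less by (simp add: dpath_def)
    let ?p = "drop (Suc j) p"
    have l: "Suc j < length p" using j by simp
    have "dpath V E ?p" using dpath_drop[OF less(2) l] .
    moreover have "hd ?p = z" using j l np by (simp add: hd_drop_conv_nth nth_tl)
    moreover have "last ?p = last p" using l by simp
    moreover have "length ?p < length p" using l by simp
    ultimately obtain q where "dpath V E q \<and> set q \<subseteq> set ?p \<and> hd q \<in> A \<and> last q \<in> B \<and>
            set (tl q) \<inter> A = {} \<and> set (butlast q) \<inter> B = {}"
      using less(1)[of ?p] z less(4) by auto
    then show ?thesis using set_drop_subset[of "Suc j" p] by blast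
  next
    case tlA: True
    show ?thesis
    proof (cases "set (butlast p) \<inter> B = {}")
      case True then show ?thesis using less tlA by blast
    next
      case False
      then obtain z where z: "z \<in> set (butlast p)" "z \<in> B" by auto
      then obtain j where j: "j < length (butlast p)" "butlast p ! j = z" by (auto simp: in_set_conv_nth)
      let ?p = "take (Suc j) p"
      have l: "Suc j < length p" using j by simp
      have "dpath V E ?p" using dpath_take[OF less(2)] by simp
      moreover have "last ?p = z" using j l using last_take_Suc[of j p] by (simp add: nth_butlast)
      moreover have "hd ?p = hd p" using l by (cases p) auto
      moreover have "length ?p < length p" using l by simp
      ultimately have "\<exists>q. dpath V E q \<and> set q \<subseteq> set ?p \<and> hd q \<in> A \<and> last q \<in> B \<and>
              set (tl q) \<inter> A = {} \<and> set (butlast q) \<inter> B = {}"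
        using less(1)[of ?p] z(2) less(3) by simp
      then obtain q where "dpath V E q \<and> set q \<subseteq> set ?p \<and> hd q \<in> A \<and> last q \<in> B \<and>
              set (tl q) \<inter> A = {} \<and> set (butlast q) \<inter> B = {}" by blast
      then show ?thesis using set_take_subset[of "Suc j" p] by blast
    qed
  qed
qed

definition conn :: "('a \<times> 'a) set \<Rightarrow> 'a set \<Rightarrow> 'a \<Rightarrow> 'a \<Rightarrow> bool" where
  "conn E X a b \<longleftrightarrow> a \<notin> X \<and> (a, b) \<in> (E \<inter> (-X) \<times> (-X))\<^sup>*"

definition sep :: "('a \<times> 'a) set \<Rightarrow> 'a set \<Rightarrow> 'a set \<Rightarrow> 'a set \<Rightarrow> bool" where
  "sep E A B X \<longleftrightarrow> (\<forall>a\<in>A. \<forall>b\<in>B. \<not> conn E X a b)"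

definition dfam :: "'a set \<Rightarrow> ('a \<times> 'a) set \<Rightarrow> 'a set \<Rightarrow> 'a set \<Rightarrow> 'a list set \<Rightarrow> bool" where
  "dfam V E A B P \<longleftrightarrow> (\<forall>p\<in>P. dpath V E p \<and> hd p \<in> A \<and> last p \<in> B) \<and>
     (\<forall>p\<in>P. \<forall>q\<in>P. p \<noteq> q \<longrightarrow> set p \<inter> set q = {})"

definition nfam :: "'a set \<Rightarrow> ('a \<times> 'a) set \<Rightarrow> 'a set \<Rightarrow> 'a set \<Rightarrow> 'a list set \<Rightarrow> bool" where
  "nfam V E A B P \<longleftrightarrow> dfam V E A B P \<and> (\<forall>p\<in>P. set (tl p) \<inter> A = {} \<and> set (butlast p) \<inter> B = {})"

lemma rtrancl_avoid:
  assumes "(a, b) \<in> (E \<inter> (-X) \<times> (-X))\<^sup>*" "a \<notin> X" shows "b \<notin> X"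
  using assms by (induction rule: rtrancl_induct) blast+

lemma conn_mono:
  assumes "conn E X a b" "E \<subseteq> E'" "X' \<subseteq> X" shows "conn E' X' a b"
proof -
  have "E \<inter> (-X) \<times> (-X) \<subseteq> E' \<inter> (-X') \<times> (-X')" using assms by auto
  then have "(E \<inter> (-X) \<times> (-X))\<^sup>* \<subseteq> (E' \<inter> (-X') \<times> (-X'))\<^sup>*" by (rule rtrancl_mono)
  then show ?thesis using assms(1,3) unfolding conn_def by blast
qed

lemma first_hit:
  assumes "(a, b) \<in> (E \<inter> (-X) \<times> (-X))\<^sup>*" "a \<notin> X" "x \<in> W"
  shows "(a \<notin> W \<and> (a, b) \<in> (E \<inter> (-(X \<union> W)) \<times> (-(X \<union> W)))\<^sup>*) \<or>
         (\<exists>s\<in>W. (a, s) \<in> ((E - {(x, y)}) \<inter> (-X) \<times> (-X))\<^sup>*)"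
  using assms(1)
proof (induction rule: rtrancl_induct)
  case base then show ?case by auto
next
  case (step c b)
  show ?case
  proof (cases "\<exists>s\<in>W. (a, s) \<in> ((E - {(x, y)}) \<inter> (-X) \<times> (-X))\<^sup>*")
    case True then show ?thesis by blast
  next
    case False
    then have aW: "a \<notin> W" and ac: "(a, c) \<in> (E \<inter> (-(X \<union> W)) \<times> (-(X \<union> W)))\<^sup>*" using step by auto
    have cXW: "c \<notin> X \<union> W" using rtrancl_avoid[OF ac] aW assms(2) by blast
    have sub: "E \<inter> (-(X \<union> W)) \<times> (-(X \<union> W)) \<subseteq> (E - {(x, y)}) \<inter> (-X) \<times> (-X)" using assms(3) by auto
    show ?thesis
    proof (cases "b \<in> W")
      case True
      have "(a, c) \<in> ((E - {(x, y)}) \<inter> (-X) \<times> (-X))\<^sup>*" using ac rtrancl_mono[OF sub] by blast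
      moreover have "(c, b) \<in> (E - {(x, y)}) \<inter> (-X) \<times> (-X)" using step(2) cXW assms(3) by auto
      ultimately show ?thesis using True by (meson rtrancl_into_rtrancl)
    next
      case False
      then have "(c, b) \<in> E \<inter> (-(X \<union> W)) \<times> (-(X \<union> W))" using step(2) cXW by auto
      then show ?thesis using ac aW by (meson rtrancl_into_rtrancl)
    qed
  qed
qed

lemma last_hit:
  assumes "(a, b) \<in> (E \<inter> (-X) \<times> (-X))\<^sup>*" "a \<notin> X" "y \<in> W"
  shows "(b \<notin> W \<and> (a, b) \<in> (E \<inter> (-(X \<union> W)) \<times> (-(X \<union> W)))\<^sup>*) \<or>
         (\<exists>s\<in>W. s \<notin> X \<and> (s, b) \<in> ((E - {(x, y)}) \<inter> (-X) \<times> (-X))\<^sup>*)"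
  using assms(1,2)
proof (induction rule: converse_rtrancl_induct)
  case base then show ?case by auto
next
  case (step a c)
  have cX: "c \<notin> X" using step(1) by auto
  show ?case
  proof (cases "\<exists>s\<in>W. s \<notin> X \<and> (s, b) \<in> ((E - {(x, y)}) \<inter> (-X) \<times> (-X))\<^sup>*")
    case True then show ?thesis by blast
  next
    case False
    then have bW: "b \<notin> W" and cb: "(c, b) \<in> (E \<inter> (-(X \<union> W)) \<times> (-(X \<union> W)))\<^sup>*" using step cX by auto
    have cXW: "c \<notin> X \<union> W"
    proof (cases "c = b")
      case True then show ?thesis using bW cX by auto
    next
      case False
      then obtain d where "(c, d) \<in> E \<inter> (-(X \<union> W)) \<times> (-(X \<union> W))" using cb converse_rtranclE by metis
      then show ?thesis by auto
    qed
    have sub: "E \<inter> (-(X \<union> W)) \<times> (-(X \<union> W)) \<subseteq> (E - {(x, y)}) \<inter> (-X) \<times> (-X)" using assms(3) by auto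
    show ?thesis
    proof (cases "a \<in> W")
      case True
      have "(c, b) \<in> ((E - {(x, y)}) \<inter> (-X) \<times> (-X))\<^sup>*" using cb rtrancl_mono[OF sub] by blast
      moreover have "(a, c) \<in> (E - {(x, y)}) \<inter> (-X) \<times> (-X)" using step(1) cXW assms(3) by auto
      ultimately show ?thesis using True step(4) by (meson converse_rtrancl_into_rtrancl)
    next
      case False
      then have "(a, c) \<in> E \<inter> (-(X \<union> W)) \<times> (-(X \<union> W))" using step(1) cXW by auto
      then show ?thesis using cb bW by (meson converse_rtrancl_into_rtrancl)
    qed
  qed
qed

lemma normalize_fam:
  assumes "dfam V E A B P" "finite P"
  shows "\<exists>P'. nfam V E A B P' \<and> finite P' \<and> card P' = card P"
proof -
  have "\<forall>p\<in>P. \<exists>q. dpath V E q \<and> set q \<subseteq> set p \<and> hd q \<in> A \<and> last q \<in> B \<and>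
            set (tl q) \<inter> A = {} \<and> set (butlast q) \<inter> B = {}"
    using assms(1) normalize_path unfolding dfam_def by metis
  then obtain f where f: "\<And>p. p \<in> P \<Longrightarrow> dpath V E (f p) \<and> set (f p) \<subseteq> set p \<and> hd (f p) \<in> A \<and> last (f p) \<in> B \<and>
            set (tl (f p)) \<inter> A = {} \<and> set (butlast (f p)) \<inter> B = {}" by metis
  have ne: "p \<in> P \<Longrightarrow> f p \<noteq> []" for p using f[of p] by (simp add: dpath_def)
  have disj: "p \<in> P \<Longrightarrow> q \<in> P \<Longrightarrow> p \<noteq> q \<Longrightarrow> set (f p) \<inter> set (f q) = {}" for p q
    using f[of p] f[of q] assms(1) unfolding dfam_def by blast
  have inj: "inj_on f P"
  proof (rule inj_onI)
    fix p q assume "p \<in> P" "q \<in> P" "f p = f q"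
    then show "p = q" using disj ne by (metis Int_absorb set_empty)
  qed
  show ?thesis
  proof (intro exI conjI)
    show "nfam V E A B (f ` P)" unfolding nfam_def dfam_def
    proof (intro conjI ballI impI)
      fix p' q' assume "p' \<in> f ` P" "q' \<in> f ` P" "p' \<noteq> q'"
      then show "set p' \<inter> set q' = {}" using disj by auto
    qed (use f in auto)
    show "finite (f ` P)" using assms(2) by simp
    show "card (f ` P) = card P" using card_image[OF inj] .
  qed
qed

lemma set_butlast_last: "p \<noteq> [] \<Longrightarrow> set p = insert (last p) (set (butlast p))"
  by (metis append_butlast_last_id list.simps(15) rotate1.simps(2) set_rotate1)

lemma set_hd_tl: "p \<noteq> [] \<Longrightarrow> set p = insert (hd p) (set (tl p))"
  by (metis list.collapse list.simps(15))

lemma nth_in_butlast: "k < length p - 1 \<Longrightarrow> p ! k \<in> set (butlast p)"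
  by (metis length_butlast nth_butlast nth_mem)

lemma nth_in_tl: "0 < k \<Longrightarrow> k < length p \<Longrightarrow> p ! k \<in> set (tl p)"
  by (metis Suc_pred length_tl less_Suc_eq_0_disj nat_less_le nth_mem nth_tl
      less_diff_conv add.commute plus_1_eq_Suc)

lemma glue_key:
  assumes nf1: "nfam V E' A (insert x S) P1" and nf2: "nfam V E' (insert y S) B P2"
    and sepS: "sep E' A B S"
    and p: "p \<in> P1" and q: "q \<in> P2" and zp: "z \<in> set p" and zq: "z \<in> set q"
  shows "z \<in> S \<and> z = last p \<and> z = hd q"
proof -
  have dp: "dpath V E' p" "hd p \<in> A" and bp: "set (butlast p) \<inter> insert x S = {}"
    using nf1 p unfolding nfam_def dfam_def by auto
  have dq: "dpath V E' q" "last q \<in> B" and tq: "set (tl q) \<inter> insert y S = {}"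
    using nf2 q unfolding nfam_def dfam_def by auto
  have pne: "p \<noteq> []" and qne: "q \<noteq> []" using dp dq by (auto simp: dpath_def)
  have zS: "z \<in> S"
  proof (rule ccontr)
    assume nz: "z \<notin> S"
    obtain i where i: "i < length p" "p ! i = z" using zp by (auto simp: in_set_conv_nth)
    obtain j where j: "j < length q" "q ! j = z" using zq by (auto simp: in_set_conv_nth)
    let ?R = "E' \<inter> (-S) \<times> (-S)"
    have pk: "p ! k \<notin> S" if "k \<le> i" for k
    proof (cases "k < length p - 1")
      case True then show ?thesis using nth_in_butlast[OF True] bp by auto
    next
      case False then have "k = i" using that i by linarith
      then show ?thesis using nz i by simp
    qed
    have qk: "q ! k \<notin> S" if "j \<le> k" "k < length q" for k
    proof (cases "0 < k")
      case True then show ?thesis using nth_in_tl[OF True that(2)] tq by auto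
    next
      case False then have "k = j" using that by linarith
      then show ?thesis using nz j by simp
    qed
    have "(p ! 0, p ! i) \<in> ?R\<^sup>*"
      by (rule chain_rtrancl) (use dp(1) i pk in \<open>auto simp: dpath_def\<close>)
    moreover have "(q ! j, q ! (length q - 1)) \<in> ?R\<^sup>*"
      by (rule chain_rtrancl) (use dq(1) j qk in \<open>auto simp: dpath_def\<close>)
    ultimately have "(hd p, last q) \<in> ?R\<^sup>*"
      using i j pne qne by (simp add: hd_conv_nth last_conv_nth)
    moreover have "hd p \<notin> S" using pk[of 0] pne by (simp add: hd_conv_nth)
    ultimately have "conn E' S (hd p) (last q)" unfolding conn_def by simp
    then show False using sepS dp(2) dq(2) unfolding sep_def by blast
  qed
  have "z = last p" using zS zp bp set_butlast_last[OF pne] by auto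
  moreover have "z = hd q" using zS zq tq set_hd_tl[OF qne] by auto
  ultimately show ?thesis using zS by simp
qed

lemma fam_inj:
  assumes "\<forall>p\<in>P. \<forall>q\<in>P. p \<noteq> q \<longrightarrow> set p \<inter> set q = {}" "\<forall>p\<in>P. p \<noteq> []"
    and "\<forall>p\<in>P. f p \<in> set p"
  shows "inj_on f P"
proof (rule inj_onI)
  fix p q assume pq: "p \<in> P" "q \<in> P" "f p = f q"
  show "p = q"
  proof (rule ccontr)
    assume "p \<noteq> q"
    then have "set p \<inter> set q = {}" using assms(1) pq by blast
    moreover have "f p \<in> set p" "f q \<in> set q" using assms(3) pq by auto
    ultimately show False using pq(3) by auto
  qed
qed

lemma glue_fam:
  assumes nf1: "nfam V E' A (insert x S) P1" "finite P1" "card P1 = Suc (card S)"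
    and nf2: "nfam V E' (insert y S) B P2" "finite P2" "card P2 = Suc (card S)"
    and sepS: "sep E' A B S" and fS: "finite S" and xS: "x \<notin> S" and yS: "y \<notin> S" and xy: "x \<noteq> y"
    and EE: "E' \<subseteq> E" and e: "(x, y) \<in> E"
  shows "\<exists>P. finite P \<and> card P = Suc (card S) \<and> dfam V E A B P"
proof -
  have d1: "\<forall>p\<in>P1. dpath V E' p \<and> hd p \<in> A \<and> last p \<in> insert x S"
    and j1: "\<forall>p\<in>P1. \<forall>q\<in>P1. p \<noteq> q \<longrightarrow> set p \<inter> set q = {}"
    using nf1 unfolding nfam_def dfam_def by auto
  have d2: "\<forall>p\<in>P2. dpath V E' p \<and> hd p \<in> insert y S \<and> last p \<in> B"
    and j2: "\<forall>p\<in>P2. \<forall>q\<in>P2. p \<noteq> q \<longrightarrow> set p \<inter> set q = {}"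
    using nf2 unfolding nfam_def dfam_def by auto
  have ne1: "\<forall>p\<in>P1. p \<noteq> []" using d1 by (auto simp: dpath_def)
  have ne2: "\<forall>p\<in>P2. p \<noteq> []" using d2 by (auto simp: dpath_def)
  have inj1: "inj_on last P1" by (rule fam_inj[OF j1 ne1]) (use ne1 in auto)
  have inj2: "inj_on hd P2" by (rule fam_inj[OF j2 ne2]) (use ne2 in auto)
  have im1: "last ` P1 = insert x S"
  proof (rule card_subset_eq)
    show "finite (insert x S)" using fS by simp
    show "last ` P1 \<subseteq> insert x S" using d1 by auto
    show "card (last ` P1) = card (insert x S)" using card_image[OF inj1] nf1(3) fS xS by simp
  qed
  have im2: "hd ` P2 = insert y S"
  proof (rule card_subset_eq)
    show "finite (insert y S)" using fS by simp
    show "hd ` P2 \<subseteq> insert y S" using d2 by auto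
    show "card (hd ` P2) = card (insert y S)" using card_image[OF inj2] nf2(3) fS yS by simp
  qed
  define g1 where "g1 = inv_into P1 last"
  define g2 where "g2 = inv_into P2 hd"
  have g1: "g1 s \<in> P1 \<and> last (g1 s) = s" if "s \<in> insert x S" for s
  proof -
    have "s \<in> last ` P1" using im1 that by simp
    then show ?thesis unfolding g1_def by (simp add: inv_into_into f_inv_into_f)
  qed
  have g2: "g2 s \<in> P2 \<and> hd (g2 s) = s" if "s \<in> insert y S" for s
  proof -
    have "s \<in> hd ` P2" using im2 that by simp
    then show ?thesis unfolding g2_def by (simp add: inv_into_into f_inv_into_f)
  qed
  define sx where "sx s = (if s = x then y else s)" for s
  have sx: "s \<in> insert x S \<Longrightarrow> sx s \<in> insert y S" for s unfolding sx_def by auto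
  define glue where "glue s = (if s = x then g1 x @ g2 y else g1 s @ tl (g2 s))" for s
  have gsub: "set (glue s) \<subseteq> set (g1 s) \<union> set (g2 (sx s))" for s
  proof (cases "s = x")
    case True then show ?thesis unfolding glue_def sx_def by simp
  next
    case False
    have "set (tl (g2 s)) \<subseteq> set (g2 s)" by (cases "g2 s") auto
    then show ?thesis using False unfolding glue_def sx_def by auto
  qed
  have key: "p \<in> P1 \<Longrightarrow> q \<in> P2 \<Longrightarrow> z \<in> set p \<Longrightarrow> z \<in> set q \<Longrightarrow> z \<in> S \<and> z = last p \<and> z = hd q" for p q z
    using glue_key[OF nf1(1) nf2(1) sepS] by blast
  have gpath: "dpath V E (glue s) \<and> hd (glue s) \<in> A \<and> last (glue s) \<in> B" if s: "s \<in> insert x S" for s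
  proof (cases "s = x")
    case True
    let ?p = "g1 x" and ?q = "g2 y"
    have p: "?p \<in> P1" "last ?p = x" using g1[of x] by auto
    have q: "?q \<in> P2" "hd ?q = y" using g2[of y] by auto
    have dj: "set ?p \<inter> set ?q = {}"
    proof -
      { fix z assume "z \<in> set ?p" "z \<in> set ?q"
        then have "z \<in> S \<and> z = last ?p" using key[OF p(1) q(1)] by blast
        then have False using p(2) xS by metis }
      then show ?thesis by blast
    qed
    have dpp: "dpath V E' ?p" using d1 p(1) by blast
    have dqq: "dpath V E' ?q" using d2 q(1) by blast
    have "dpath V E (?p @ ?q)"
      by (rule dpath_append[OF dpath_mono[OF dpp EE] dpath_mono[OF dqq EE] dj]) (use p q e in simp)
    moreover have "hd (?p @ ?q) \<in> A" using d1 p(1) ne1 by simp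
    moreover have "last (?p @ ?q) \<in> B" using d2 q(1) ne2 by simp
    ultimately show ?thesis using True unfolding glue_def by simp
  next
    case False
    then have sS: "s \<in> S" using s by simp
    let ?p = "g1 s" and ?q = "g2 s"
    have p: "?p \<in> P1" "last ?p = s" using g1[of s] sS by auto
    have q: "?q \<in> P2" "hd ?q = s" using g2[of s] sS by auto
    have gl: "glue s = ?p @ tl ?q" using False unfolding glue_def by simp
    have dpp0: "dpath V E' ?p" using d1 p(1) by blast
    have dpp: "dpath V E ?p" using dpath_mono[OF dpp0 EE] .
    have dqq: "dpath V E' ?q" using d2 q(1) by blast
    have qne: "?q \<noteq> []" using ne2 q(1) by blast
    have hp: "hd ?p \<in> A" using d1 p(1) by blast
    show ?thesis
    proof (cases "tl ?q = []")
      case True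
      have "?q = [s]" using True q(2) qne by (metis list.collapse)
      then have "last ?p \<in> B" using p(2) d2 q(1) by (metis last.simps)
      then show ?thesis using gl True dpp hp by simp
    next
      case tne: False
      have lq: "1 < length ?q" using tne qne by (cases ?q) auto
      have dtq0: "dpath V E' (drop 1 ?q)" by (rule dpath_drop[OF dqq lq])
      have dtq: "dpath V E (tl ?q)" using dpath_mono[OF dtq0 EE] by (simp add: drop_Suc)
      have dist: "distinct ?q" using dqq by (simp add: dpath_def)
      have hq: "hd ?q \<notin> set (tl ?q)" using dist qne by (cases ?q) auto
      have dj: "set ?p \<inter> set (tl ?q) = {}"
      proof -
        { fix z assume z: "z \<in> set ?p" "z \<in> set (tl ?q)"
          then have "z \<in> set ?q" using list.set_sel(2)[OF qne] by blast
          then have "z = hd ?q" using key[OF p(1) q(1) z(1)] by blast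
          then have False using z(2) hq by simp }
        then show ?thesis by blast
      qed
      have edge: "(last ?p, hd (tl ?q)) \<in> E"
      proof -
        have "(?q ! 0, ?q ! Suc 0) \<in> E'" using dqq lq by (simp add: dpath_def)
        moreover have "?q ! 0 = s" using q(2) qne by (simp add: hd_conv_nth)
        moreover have "?q ! Suc 0 = hd (tl ?q)" using tne lq by (simp add: hd_conv_nth nth_tl)
        ultimately show ?thesis using p(2) EE by auto
      qed
      have "dpath V E (?p @ tl ?q)" by (rule dpath_append[OF dpp dtq dj edge])
      moreover have "hd (?p @ tl ?q) \<in> A" using hp dpp by (simp add: dpath_def)
      moreover have "last (?p @ tl ?q) \<in> B" using d2 q(1) tne by (simp add: last_tl)
      ultimately show ?thesis using gl by simp
    qed
  qed
  have gdisj: "set (glue s) \<inter> set (glue s') = {}" if "s \<in> insert x S" "s' \<in> insert x S" "s \<noteq> s'" for s s'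
  proof -
    have a: "set (g1 s) \<inter> set (g1 s') = {}" using g1[OF that(1)] g1[OF that(2)] j1 that(3) by metis
    have sxne: "sx s \<noteq> sx s'" using that xS yS unfolding sx_def by auto
    have b: "set (g2 (sx s)) \<inter> set (g2 (sx s')) = {}"
      using g2[OF sx[OF that(1)]] g2[OF sx[OF that(2)]] j2 sxne by metis
    have c: "set (g1 t) \<inter> set (g2 (sx t')) = {}" if "t \<in> insert x S" "t' \<in> insert x S" "t \<noteq> t'" for t t'
    proof -
      { fix z assume z: "z \<in> set (g1 t)" "z \<in> set (g2 (sx t'))"
        have "z \<in> S \<and> z = t \<and> z = sx t'"
          using key[OF _ _ z] g1[OF that(1)] g2[OF sx[OF that(2)]] by auto
        then have False using that yS unfolding sx_def by (cases "t' = x") auto }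
      then show ?thesis by blast
    qed
    { fix z assume z: "z \<in> set (glue s)" "z \<in> set (glue s')"
      have z1: "z \<in> set (g1 s) \<or> z \<in> set (g2 (sx s))" using z(1) gsub[of s] by blast
      have z2: "z \<in> set (g1 s') \<or> z \<in> set (g2 (sx s'))" using z(2) gsub[of s'] by blast
      have False using z1 z2 a b c[OF that] c[OF that(2,1)] that(3) by blast }
    then show ?thesis by blast
  qed
  have gne: "glue s \<noteq> []" if "s \<in> insert x S" for s using gpath[OF that] by (simp add: dpath_def)
  have ginj: "inj_on glue (insert x S)"
  proof (rule inj_onI)
    fix s s' assume "s \<in> insert x S" "s' \<in> insert x S" "glue s = glue s'"
    then show "s = s'" using gdisj gne by (metis Int_absorb set_empty)
  qed
  show ?thesis
  proof (intro exI conjI)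
    show "finite (glue ` insert x S)" using fS by simp
    show "card (glue ` insert x S) = Suc (card S)" using card_image[OF ginj] fS xS by simp
    show "dfam V E A B (glue ` insert x S)" unfolding dfam_def
    proof (intro conjI ballI impI)
      fix p q assume "p \<in> glue ` insert x S" "q \<in> glue ` insert x S" "p \<noteq> q"
      then show "set p \<inter> set q = {}" using gdisj by auto
    qed (use gpath in auto)
  qed
qed

lemma menger_aux:
  assumes "finite V" "E \<subseteq> V \<times> V" "\<forall>x. (x, x) \<notin> E" "A \<subseteq> V" "B \<subseteq> V"
    "\<forall>X. X \<subseteq> V \<longrightarrow> sep E A B X \<longrightarrow> k \<le> card X"
  shows "\<exists>P. finite P \<and> card P = k \<and> dfam V E A B P"
  using assms
proof (induction "card E" arbitrary: E A B k rule: less_induct)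
  case less
  have finE: "finite E" using less(2,3) by (meson finite_SigmaI finite_subset)
  show ?case
  proof (cases "E = {}")
    case True
    have "sep E A B (A \<inter> B)" unfolding sep_def conn_def using True by auto
    then have "k \<le> card (A \<inter> B)" using less(5,7) by (meson inf.coboundedI1)
    then obtain C where C: "C \<subseteq> A \<inter> B" "card C = k"
      by (meson obtain_subset_with_card_n)
    have fC: "finite C" using C less(2,5) by (meson finite_subset inf.coboundedI1)
    have inj: "inj_on (\<lambda>a. [a]) C" by (auto simp: inj_on_def)
    show ?thesis
    proof (intro exI conjI)
      show "finite ((\<lambda>a. [a]) ` C)" using fC by simp
      show "card ((\<lambda>a. [a]) ` C) = k" using card_image[OF inj] C by simp
      show "dfam V E A B ((\<lambda>a. [a]) ` C)" unfolding dfam_def dpath_def using C less(5) by auto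
    qed
  next
    case False
    then obtain x y where e: "(x, y) \<in> E" by auto
    let ?E' = "E - {(x, y)}"
    have lt: "card ?E' < card E" using e finE by (meson card_Diff1_less)
    have E'V: "?E' \<subseteq> V \<times> V" using less(3) by auto
    have nl': "\<forall>x. (x, x) \<notin> ?E'" using less(4) by auto
    have xV: "x \<in> V" and yV: "y \<in> V" using e less(3) by auto
    have xy: "x \<noteq> y" using e less(4) by auto
    show ?thesis
    proof (cases "\<forall>X. X \<subseteq> V \<longrightarrow> sep ?E' A B X \<longrightarrow> k \<le> card X")
      case True
      obtain P where "finite P" "card P = k" "dfam V ?E' A B P"
        using less(1)[OF lt less(2) E'V nl' less(5,6) True] by blast
      moreover have "dfam V E A B P" using \<open>dfam V ?E' A B P\<close> unfolding dfam_def
        using dpath_mono[of V ?E' _ E] by blast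
      ultimately show ?thesis by blast
    next
      case False
      then obtain S where S: "S \<subseteq> V" "sep ?E' A B S" "card S < k" by auto
      have fS: "finite S" using S(1) less(2) by (rule finite_subset)
      have sub1: "E \<inter> (-(insert x S)) \<times> (-(insert x S)) \<subseteq> ?E' \<inter> (-S) \<times> (-S)" by auto
      have sub2: "E \<inter> (-(insert y S)) \<times> (-(insert y S)) \<subseteq> ?E' \<inter> (-S) \<times> (-S)" by auto
      have f1: "sep E A B (insert x S)"
        unfolding sep_def
      proof (intro ballI notI)
        fix a b assume ab: "a \<in> A" "b \<in> B" "conn E (insert x S) a b"
        then have "conn ?E' S a b" unfolding conn_def using rtrancl_mono[OF sub1] by blast
        then show False using S(2) ab unfolding sep_def by blast
      qed
      have f2: "sep E A B (insert y S)"
        unfolding sep_def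
      proof (intro ballI notI)
        fix a b assume ab: "a \<in> A" "b \<in> B" "conn E (insert y S) a b"
        then have "conn ?E' S a b" unfolding conn_def using rtrancl_mono[OF sub2] by blast
        then show False using S(2) ab unfolding sep_def by blast
      qed
      have kx: "k \<le> card (insert x S)" using less(7) f1 S(1) xV by auto
      have ky: "k \<le> card (insert y S)" using less(7) f2 S(1) yV by auto
      have xS: "x \<notin> S" using kx S(3) by (metis insert_absorb leD)
      have yS: "y \<notin> S" using ky S(3) by (metis insert_absorb leD)
      have k: "k = Suc (card S)" using kx S(3) xS fS by simp
      have f3: "\<forall>X. X \<subseteq> V \<longrightarrow> sep ?E' A (insert x S) X \<longrightarrow> k \<le> card X"
      proof (intro allI impI)
        fix X assume X: "X \<subseteq> V" "sep ?E' A (insert x S) X"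
        have "sep E A B X" unfolding sep_def
        proof (intro ballI notI)
          fix a b assume ab: "a \<in> A" "b \<in> B" "conn E X a b"
          then have r: "(a, b) \<in> (E \<inter> (-X) \<times> (-X))\<^sup>*" "a \<notin> X" unfolding conn_def by auto
          from first_hit[where W="insert x S" and x=x and y=y, OF r(1) r(2) insertI1]
          show False
          proof (elim disjE conjE bexE)
            assume "a \<notin> insert x S" "(a, b) \<in> (E \<inter> (-(X \<union> insert x S)) \<times> (-(X \<union> insert x S)))\<^sup>*"
            then have "conn E (X \<union> insert x S) a b" using r(2) unfolding conn_def by auto
            then have "conn E (insert x S) a b" using conn_mono[of E "X \<union> insert x S" a b E "insert x S"] by blast
            then show False using f1 ab unfolding sep_def by blast
          next
            fix s assume "s \<in> insert x S" "(a, s) \<in> (?E' \<inter> (-X) \<times> (-X))\<^sup>*"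
            then have "conn ?E' X a s" using r(2) unfolding conn_def by auto
            then show False using X(2) ab \<open>s \<in> insert x S\<close> unfolding sep_def by blast
          qed
        qed
        then show "k \<le> card X" using less(7) X(1) by blast
      qed
      have f4: "\<forall>X. X \<subseteq> V \<longrightarrow> sep ?E' (insert y S) B X \<longrightarrow> k \<le> card X"
      proof (intro allI impI)
        fix X assume X: "X \<subseteq> V" "sep ?E' (insert y S) B X"
        have "sep E A B X" unfolding sep_def
        proof (intro ballI notI)
          fix a b assume ab: "a \<in> A" "b \<in> B" "conn E X a b"
          then have r: "(a, b) \<in> (E \<inter> (-X) \<times> (-X))\<^sup>*" "a \<notin> X" unfolding conn_def by auto
          from last_hit[where W="insert y S" and x=x and y=y, OF r(1) r(2) insertI1]
          show False
          proof (elim disjE conjE bexE)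
            assume "b \<notin> insert y S" "(a, b) \<in> (E \<inter> (-(X \<union> insert y S)) \<times> (-(X \<union> insert y S)))\<^sup>*"
            moreover have "a \<notin> insert y S"
            proof
              assume "a \<in> insert y S"
              moreover have "(a, b) \<in> (?E' \<inter> (-X) \<times> (-X))\<^sup>*"
                using \<open>(a, b) \<in> (E \<inter> (-(X \<union> insert y S)) \<times> (-(X \<union> insert y S)))\<^sup>*\<close>
                  rtrancl_mono[of "E \<inter> (-(X \<union> insert y S)) \<times> (-(X \<union> insert y S))" "?E' \<inter> (-X) \<times> (-X)"]
                by blast
              ultimately show False using X(2) ab r(2) unfolding sep_def conn_def by blast
            qed
            ultimately have "conn E (X \<union> insert y S) a b" using r(2) unfolding conn_def by auto
            then have "conn E (insert y S) a b" using conn_mono[of E "X \<union> insert y S" a b E "insert y S"] by blast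
            then show False using f2 ab unfolding sep_def by blast
          next
            fix s assume "s \<in> insert y S" "s \<notin> X" "(s, b) \<in> (?E' \<inter> (-X) \<times> (-X))\<^sup>*"
            then have "conn ?E' X s b" unfolding conn_def by auto
            then show False using X(2) ab \<open>s \<in> insert y S\<close> unfolding sep_def by blast
          qed
        qed
        then show "k \<le> card X" using less(7) X(1) by blast
      qed
      have xSV: "insert x S \<subseteq> V" and ySV: "insert y S \<subseteq> V" using S(1) xV yV by auto
      obtain P1 where P1: "finite P1" "card P1 = k" "dfam V ?E' A (insert x S) P1"
        using less(1)[OF lt less(2) E'V nl' less(5) xSV f3] by blast
      obtain P2 where P2: "finite P2" "card P2 = k" "dfam V ?E' (insert y S) B P2"
        using less(1)[OF lt less(2) E'V nl' ySV less(6) f4] by blast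
      obtain Q1 where Q1: "nfam V ?E' A (insert x S) Q1" "finite Q1" "card Q1 = Suc (card S)"
        using normalize_fam[OF P1(3,1)] P1(2) k by auto
      obtain Q2 where Q2: "nfam V ?E' (insert y S) B Q2" "finite Q2" "card Q2 = Suc (card S)"
        using normalize_fam[OF P2(3,1)] P2(2) k by auto
      show ?thesis using glue_fam[OF Q1 Q2 S(2) fS xS yS xy _ e] k by blast
    qed
  qed
qed

lemma leave_root:
  assumes "(r, y) \<in> R\<^sup>*" "y \<noteq> r"
  shows "\<exists>a. (r, a) \<in> R \<and> a \<noteq> r \<and> (a, y) \<in> (R \<inter> (-{r}) \<times> (-{r}))\<^sup>*"
  using assms
proof (induction rule: rtrancl_induct)
  case base then show ?case by simp
next
  case (step c b)
  show ?case
  proof (cases "c = r")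
    case True then show ?thesis using step by auto
  next
    case False
    then obtain a where a: "(r, a) \<in> R" "a \<noteq> r" "(a, c) \<in> (R \<inter> (-{r}) \<times> (-{r}))\<^sup>*" using step by auto
    have "(c, b) \<in> R \<inter> (-{r}) \<times> (-{r})" using step(2,4) False by auto
    then show ?thesis using a by (meson rtrancl_into_rtrancl)
  qed
qed

lemma dpath_cons_root:
  assumes "dpath V' H' p" "V' \<subseteq> V" "H' \<subseteq> H" "r \<in> V" "r \<notin> V'" "(r, hd p) \<in> H"
  shows "dpath V H (r # p)"
  unfolding dpath_def
proof (intro conjI allI impI)
  show "r # p \<noteq> []" by simp
  show "distinct (r # p)" using assms(1,5) by (auto simp: dpath_def)
  show "set (r # p) \<subseteq> V" using assms(1,2,4) by (auto simp: dpath_def)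
  fix i assume i: "Suc i < length (r # p)"
  show "((r # p) ! i, (r # p) ! Suc i) \<in> H"
  proof (cases i)
    case 0 then show ?thesis using assms(1,6) by (simp add: dpath_def hd_conv_nth)
  next
    case (Suc j) then show ?thesis using assms(1,3) i by (auto simp: dpath_def)
  qed
qed

lemma fan_menger:
  assumes fV: "finite V" and HV: "H \<subseteq> V \<times> V" and nl: "\<forall>x. (x, x) \<notin> H" and rV: "r \<in> V"
    and YV: "Y \<subseteq> V - {r}"
    and big: "\<forall>Z. Z \<subseteq> V - {r} \<longrightarrow> (\<forall>y\<in>Y. \<not> conn H Z r y) \<longrightarrow> card Y \<le> card Z"
  shows "\<exists>L. (\<forall>p\<in>L. dpath V H p \<and> hd p = r \<and> last p \<in> Y) \<and>
             (\<forall>p\<in>L. \<forall>q\<in>L. p \<noteq> q \<longrightarrow> set p \<inter> set q \<subseteq> {r}) \<and> last ` L = Y"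
proof -
  define V' where "V' = V - {r}"
  define H' where "H' = H \<inter> V' \<times> V'"
  define A where "A = {a \<in> V'. (r, a) \<in> H}"
  have fV': "finite V'" using fV unfolding V'_def by simp
  have H'V: "H' \<subseteq> V' \<times> V'" unfolding H'_def by auto
  have nl': "\<forall>x. (x, x) \<notin> H'" using nl unfolding H'_def by auto
  have AV: "A \<subseteq> V'" unfolding A_def by auto
  have YV': "Y \<subseteq> V'" using YV unfolding V'_def by auto
  have hyp: "\<forall>X. X \<subseteq> V' \<longrightarrow> sep H' A Y X \<longrightarrow> card Y \<le> card X"
  proof (intro allI impI)
    fix X assume X: "X \<subseteq> V'" "sep H' A Y X"
    have "\<forall>y\<in>Y. \<not> conn H X r y"
    proof (intro ballI notI)
      fix y assume y: "y \<in> Y" "conn H X r y"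
      have yr: "y \<noteq> r" using y YV by auto
      have rX: "r \<notin> X" using y(2) unfolding conn_def by simp
      obtain a where a: "(r, a) \<in> H \<inter> (-X) \<times> (-X)" "a \<noteq> r"
        "(a, y) \<in> (H \<inter> (-X) \<times> (-X) \<inter> (-{r}) \<times> (-{r}))\<^sup>*"
        using leave_root[OF _ yr] y(2) unfolding conn_def by blast
      have sub: "H \<inter> (-X) \<times> (-X) \<inter> (-{r}) \<times> (-{r}) \<subseteq> H' \<inter> (-X) \<times> (-X)"
        using HV unfolding H'_def V'_def by auto
      have "(a, y) \<in> (H' \<inter> (-X) \<times> (-X))\<^sup>*" using a(3) rtrancl_mono[OF sub] by blast
      moreover have "a \<in> A" using a HV unfolding A_def V'_def by auto
      moreover have "a \<notin> X" using a(1) by auto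
      ultimately show False using X(2) y(1) unfolding sep_def conn_def by blast
    qed
    then show "card Y \<le> card X" using big X(1) unfolding V'_def by blast
  qed
  obtain P where P: "finite P" "card P = card Y" "dfam V' H' A Y P"
    using menger_aux[OF fV' H'V nl' AV YV' hyp] by blast
  have dP: "\<forall>p\<in>P. dpath V' H' p \<and> hd p \<in> A \<and> last p \<in> Y"
    and jP: "\<forall>p\<in>P. \<forall>q\<in>P. p \<noteq> q \<longrightarrow> set p \<inter> set q = {}" using P(3) unfolding dfam_def by auto
  have neP: "\<forall>p\<in>P. p \<noteq> []" using dP by (auto simp: dpath_def)
  have injP: "inj_on last P" by (rule fam_inj[OF jP neP]) (use neP in auto)
  define L where "L = (\<lambda>p. r # p) ` P"
  show ?thesis
  proof (intro exI conjI)
    show "\<forall>p\<in>L. dpath V H p \<and> hd p = r \<and> last p \<in> Y"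
    proof
      fix p' assume "p' \<in> L"
      then obtain p where p: "p \<in> P" "p' = r # p" unfolding L_def by auto
      have "dpath V H (r # p)"
      proof (rule dpath_cons_root)
        show "dpath V' H' p" using dP p(1) by blast
        show "(r, hd p) \<in> H" using dP p(1) unfolding A_def by blast
      qed (use rV in \<open>auto simp: V'_def H'_def\<close>)
      then show "dpath V H p' \<and> hd p' = r \<and> last p' \<in> Y" using p dP neP by auto
    qed
    show "\<forall>p\<in>L. \<forall>q\<in>L. p \<noteq> q \<longrightarrow> set p \<inter> set q \<subseteq> {r}"
      unfolding L_def using jP by auto
    have "last ` L = last ` P" unfolding L_def using neP by (auto simp: image_iff)
    moreover have "last ` P = Y"
    proof (rule card_subset_eq)
      show "finite Y" using YV fV by (meson finite_Diff finite_subset)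
      show "last ` P \<subseteq> Y" using dP by auto
      show "card (last ` P) = card Y" using card_image[OF injP] P(2) by simp
    qed
    ultimately show "last ` L = Y" by simp
  qed
qed

lemma inner_snoc: "q \<noteq> [] \<Longrightarrow> inner (q @ [w]) = set (tl q)"
  unfolding inner_def by (cases q) auto

lemma last_edge_snoc: "q \<noteq> [] \<Longrightarrow> last_edge (q @ [w]) = (last q, w)"
  unfolding last_edge_def by (simp add: nth_append last_conv_nth)

lemma realize:
  assumes dg: "digraph V E" and wV: "w \<in> V" and rw: "r \<noteq> w" and vw: "v \<noteq> w"
    and HE: "H \<subseteq> E - {(u, v)}" and Hw: "\<forall>e\<in>H. fst e \<noteq> w"
    and IE: "I \<subseteq> in_edges E w" and T: "T = fst ` I - {r}" and TY: "T \<subseteq> Y"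
    and L1: "\<forall>p\<in>L. dpath V H p \<and> hd p = r \<and> last p \<in> Y"
    and L2: "\<forall>p\<in>L. \<forall>q\<in>L. p \<noteq> q \<longrightarrow> set p \<inter> set q \<subseteq> {r}"
    and L3: "last ` L = Y"
  shows "I \<in> Gset V (E - {(u, v)}) r w"
proof -
  have EV: "E \<subseteq> V \<times> V" and nl: "\<forall>x. (x, x) \<notin> E" using dg unfolding digraph_def by auto
  define q where "q = inv_into L last"
  have q: "q t \<in> L \<and> last (q t) = t" if "t \<in> T" for t
  proof -
    have "t \<in> last ` L" using L3 TY that by blast
    then show ?thesis unfolding q_def by (simp add: inv_into_into f_inv_into_f)
  qed
  have qne: "q t \<noteq> []" if "t \<in> T" for t using q[OF that] L1 by (auto simp: dpath_def)
  have tw: "(t, w) \<in> I" if "t \<in> T" for t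
  proof -
    have "t \<in> fst ` I" using that T by simp
    then obtain e where "e \<in> I" "t = fst e" by blast
    moreover have "snd e = w" using \<open>e \<in> I\<close> IE unfolding in_edges_def by auto
    ultimately show ?thesis by (metis prod.collapse)
  qed
  have wq: "w \<notin> set (q t)" if "t \<in> T" for t
  proof
    assume "w \<in> set (q t)"
    then obtain i where i: "i < length (q t)" "q t ! i = w" by (auto simp: in_set_conv_nth)
    have dq: "dpath V H (q t)" using q[OF that] L1 by blast
    show False
    proof (cases "Suc i < length (q t)")
      case True
      then have "(q t ! i, q t ! Suc i) \<in> H" using dq by (simp add: dpath_def)
      then show False using Hw i by force
    next
      case False
      then have "length (q t) - 1 = i" using i by simp
      then have "last (q t) = w" using i qne[OF that] by (simp add: last_conv_nth)
      then have "t = w" using q[OF that] by simp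
      then show False using tw[OF that] IE nl unfolding in_edges_def by auto
    qed
  qed
  define Ps where "Ps = (\<lambda>t. q t @ [w]) ` T \<union> (if (r, w) \<in> I then {[r, w]} else {})"
  have dp1: "dpath V (E - {(u, v)}) (q t @ [w])" if "t \<in> T" for t
  proof (rule dpath_append)
    show "dpath V (E - {(u, v)}) (q t)" using q[OF that] L1 dpath_mono[OF _ HE] by blast
    show "dpath V (E - {(u, v)}) [w]" using wV by (simp add: dpath_def)
    show "set (q t) \<inter> set [w] = {}" using wq[OF that] by simp
    show "(last (q t), hd [w]) \<in> E - {(u, v)}" using q[OF that] tw[OF that] IE vw unfolding in_edges_def by auto
  qed
  have inn: "inner (q t @ [w]) = set (tl (q t))" if "t \<in> T" for t using inner_snoc[OF qne[OF that]] .
  have rtl: "r \<notin> set (tl (q t))" if "t \<in> T" for t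
  proof -
    have "distinct (q t)" "hd (q t) = r" using q[OF that] L1 by (auto simp: dpath_def)
    then show ?thesis using qne[OF that] by (cases "q t") auto
  qed
  have tlsub: "set (tl (q t)) \<subseteq> set (q t)" for t by (cases "q t") auto
  have qinj: "q t \<noteq> q t'" if "t \<in> T" "t' \<in> T" "t \<noteq> t'" for t t' using q that by metis
  have A1: "\<forall>p\<in>Ps. dpath V (E - {(u, v)}) p \<and> hd p = r \<and> last p = w"
  proof
    fix p assume "p \<in> Ps"
    then consider t where "t \<in> T" "p = q t @ [w]" | "(r, w) \<in> I" "p = [r, w]"
      unfolding Ps_def by (auto split: if_splits)
    then show "dpath V (E - {(u, v)}) p \<and> hd p = r \<and> last p = w"
    proof cases
      case 1 then show ?thesis using dp1 q L1 qne by auto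
    next
      case 2 then show ?thesis using rw vw IE EV unfolding in_edges_def dpath_def
        by (auto simp: less_Suc_eq)
    qed
  qed
  have A2: "\<forall>p\<in>Ps. \<forall>p'\<in>Ps. p \<noteq> p' \<longrightarrow> inner p \<inter> inner p' = {}"
  proof (intro ballI impI)
    fix p p' assume pp: "p \<in> Ps" "p' \<in> Ps" "p \<noteq> p'"
    have inner_cases: "inner x = {} \<or> (\<exists>t\<in>T. x = q t @ [w] \<and> inner x = set (tl (q t)))" if "x \<in> Ps" for x
      using that inn unfolding Ps_def inner_def by (auto split: if_splits)
    show "inner p \<inter> inner p' = {}"
    proof (cases "inner p = {} \<or> inner p' = {}")
      case True then show ?thesis by auto
    next
      case False
      then obtain t t' where t: "t \<in> T" "p = q t @ [w]" "inner p = set (tl (q t))"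
        and t': "t' \<in> T" "p' = q t' @ [w]" "inner p' = set (tl (q t'))"
        using inner_cases[OF pp(1)] inner_cases[OF pp(2)] by blast
      have "t \<noteq> t'" using t t' pp(3) by auto
      then have "q t \<noteq> q t'" using qinj t t' by blast
      then have "set (q t) \<inter> set (q t') \<subseteq> {r}" using L2 q t(1) t'(1) by blast
      then show ?thesis using t t' rtl tlsub by blast
    qed
  qed
  have rws: "rw_path_system V (E - {(u, v)}) r w Ps"
    unfolding rw_path_system_def using A1 A2 by blast
  have le: "last_edge ` Ps = I"
  proof
    show "last_edge ` Ps \<subseteq> I"
    proof
      fix e assume "e \<in> last_edge ` Ps"
      then obtain p where p: "p \<in> Ps" "e = last_edge p" by auto
      then consider t where "t \<in> T" "p = q t @ [w]" | "(r, w) \<in> I" "p = [r, w]"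
        unfolding Ps_def by (auto split: if_splits)
      then show "e \<in> I"
      proof cases
        case 1
        have "e = (last (q t), w)" using p(2) 1(2) last_edge_snoc[OF qne[OF 1(1)]] by simp
        then show ?thesis using q[OF 1(1)] tw[OF 1(1)] by simp
      next
        case 2 then show ?thesis using p by (simp add: last_edge_def)
      qed
    qed
  next
    show "I \<subseteq> last_edge ` Ps"
    proof
      fix e assume e: "e \<in> I"
      have sw: "snd e = w" using e IE unfolding in_edges_def by auto
      define a where "a = fst e"
      have ea: "e = (a, w)" using sw unfolding a_def by (cases e) simp
      show "e \<in> last_edge ` Ps"
      proof (cases "a = r")
        case True
        then have "[r, w] \<in> Ps" using e ea unfolding Ps_def by auto
        moreover have "last_edge [r, w] = e" using ea True by (simp add: last_edge_def)
        ultimately show ?thesis by (metis image_eqI)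
      next
        case False
        then have aT: "a \<in> T" using T e unfolding a_def by blast
        then have "q a @ [w] \<in> Ps" unfolding Ps_def by blast
        moreover have "last_edge (q a @ [w]) = e" using last_edge_snoc[OF qne[OF aT]] q[OF aT] ea by simp
        ultimately show ?thesis by (metis image_eqI)
      qed
    qed
  qed
  have "I \<subseteq> in_edges (E - {(u, v)}) w" using IE vw unfolding in_edges_def by auto
  then show ?thesis unfolding Gset_def using rws le by blast
qed

lemma inner_take:
  assumes "j < length p" "x \<in> inner (take (Suc j) p)"
  shows "\<exists>k. 0 < k \<and> k < j \<and> x = p ! k"
proof -
  have tk: "take (Suc j) p = take j p @ [p ! j]" using assms(1) by (simp add: take_Suc_conv_app_nth)
  have "inner (take (Suc j) p) = set (tl (take j p))"
  proof (cases j)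
    case 0 then show ?thesis using tk unfolding inner_def by simp
  next
    case (Suc j')
    then have "take j p \<noteq> []" using assms(1) by (cases p) auto
    then show ?thesis using tk unfolding inner_def by (cases "take j p") auto
  qed
  then have "x \<in> set (tl (take j p))" using assms(2) by simp
  then obtain m where m: "m < length (tl (take j p))" "tl (take j p) ! m = x" by (auto simp: in_set_conv_nth)
  have "x = p ! Suc m" using m assms(1) by (simp add: nth_tl)
  moreover have "Suc m < j" using m assms(1) by simp
  ultimately show ?thesis by blast
qed

lemma dpath_nth_inj:
  assumes "dpath V E p" "i < length p" "j < length p" "p ! i = p ! j" shows "i = j"
  using assms nth_eq_iff_index_eq unfolding dpath_def by blast

lemma core:
  assumes dg: "digraph V E" and rV: "r \<in> V" and wV: "w \<in> V" and wr: "w \<noteq> r"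
    and uvE: "(u, v) \<in> E" and ur: "u \<noteq> r" and vw: "v \<noteq> w"
    and IE: "I \<subseteq> in_edges E w"
    and notG: "I \<notin> Gset V (E - {(u, v)}) r w"
    and T: "T = fst ` I - {r}" and TY: "T \<subseteq> Y" and YT: "Y \<subseteq> insert w T"
    and wc: "w \<in> Y \<or> (\<forall>y. (y, w) \<in> E \<longrightarrow> y \<in> Y)"
    and L1: "\<forall>p\<in>L. dpath V E p \<and> hd p = r \<and> last p \<in> Y \<and> w \<notin> set (butlast p)"
    and L2: "\<forall>p\<in>L. \<forall>q\<in>L. p \<noteq> q \<longrightarrow> set p \<inter> set q \<subseteq> {r}"
    and L3: "last ` L = Y"
  shows "\<exists>S Ps. S \<subseteq> V - {r} \<and> v \<in> S \<and> rS_path_system V E r S Ps \<and> last ` Ps = S \<and>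
           (\<forall>x. (x, v) \<in> in_edges E v - {(u, v)} \<longrightarrow>
              (\<forall>p. dpath V E p \<and> hd p = r \<and> last p = x \<longrightarrow> set p \<inter> S \<noteq> {})) \<and>
           (\<exists>P\<in>Ps. 2 \<le> length P \<and> last_edge P = (u, v))"
proof -
  have EV: "E \<subseteq> V \<times> V" and nl: "\<forall>x. (x, x) \<notin> E" and fV: "finite V"
    using dg unfolding digraph_def by auto
  have TV: "T \<subseteq> V" using T IE EV unfolding in_edges_def by auto
  have YV: "Y \<subseteq> V - {r}" using YT TV wV wr T by auto
  have fY: "finite Y" using YV fV by (meson finite_Diff finite_subset)
  define H where "H = {e \<in> E. e \<noteq> (u, v) \<and> fst e \<noteq> w}"
  have HV: "H \<subseteq> V \<times> V" using EV unfolding H_def by auto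
  have nlH: "\<forall>x. (x, x) \<notin> H" using nl unfolding H_def by auto
  obtain Z where Z: "Z \<subseteq> V - {r}" "\<forall>y\<in>Y. \<not> conn H Z r y" "card Z < card Y"
  proof -
    have "\<not> (\<forall>Z. Z \<subseteq> V - {r} \<longrightarrow> (\<forall>y\<in>Y. \<not> conn H Z r y) \<longrightarrow> card Y \<le> card Z)"
    proof
      assume big: "\<forall>Z. Z \<subseteq> V - {r} \<longrightarrow> (\<forall>y\<in>Y. \<not> conn H Z r y) \<longrightarrow> card Y \<le> card Z"
      obtain L' where L': "\<forall>p\<in>L'. dpath V H p \<and> hd p = r \<and> last p \<in> Y"
        "\<forall>p\<in>L'. \<forall>q\<in>L'. p \<noteq> q \<longrightarrow> set p \<inter> set q \<subseteq> {r}" "last ` L' = Y"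
        using fan_menger[OF fV HV nlH rV YV big] by blast
      have "I \<in> Gset V (E - {(u, v)}) r w"
      proof (rule realize[OF dg wV _ vw _ _ IE T TY L'])
        show "r \<noteq> w" using wr by simp
        show "H \<subseteq> E - {(u, v)}" unfolding H_def by auto
        show "\<forall>e\<in>H. fst e \<noteq> w" unfolding H_def by auto
      qed
      then show False using notG by simp
    qed
    then have "\<exists>Z. Z \<subseteq> V - {r} \<and> (\<forall>y\<in>Y. \<not> conn H Z r y) \<and> card Z < card Y"
      by (simp add: not_le)
    then show ?thesis using that by blast
  qed
  define R where "R = H \<inter> (-Z) \<times> (-Z)"
  have rZ: "r \<notin> Z" using Z(1) by auto
  have fZ: "finite Z" using Z(1) fV by (meson finite_Diff finite_subset)
  have noconn: "(r, y) \<notin> R\<^sup>*" if "y \<in> Y" for y using Z(2) that rZ unfolding conn_def R_def by blast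
  have neL: "\<forall>p\<in>L. p \<noteq> []" using L1 by (auto simp: dpath_def)
  have rY: "r \<notin> Y" using YV by auto
  have injL: "inj_on last L"
  proof (rule inj_onI)
    fix p q assume pq: "p \<in> L" "q \<in> L" "last p = last q"
    show "p = q"
    proof (rule ccontr)
      assume "p \<noteq> q"
      then have "set p \<inter> set q \<subseteq> {r}" using L2 pq by blast
      moreover have "last p \<in> set p" using neL pq(1) by simp
      moreover have "last q \<in> set q" using neL pq(2) by simp
      ultimately have "last p = r" using pq(3) by auto
      then show False using L1 pq(1) rY by auto
    qed
  qed
  have fL: "finite L" using L3 fY injL finite_imageD[of last L] by simp
  have cL: "card L = card Y" using card_image[OF injL] L3 by simp
  define uses where "uses p \<longleftrightarrow> (\<exists>i. Suc i < length p \<and> p ! i = u \<and> p ! Suc i = v)" for p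
  have hitZ: "set p \<inter> Z \<noteq> {}" if p: "p \<in> L" "\<not> uses p" for p
  proof
    assume nz: "set p \<inter> Z = {}"
    have dp: "dpath V E p" "hd p = r" "last p \<in> Y" "w \<notin> set (butlast p)" using L1 p(1) by auto
    have "(hd p, last p) \<in> R\<^sup>*"
    proof (rule dpath_rtrancl)
      show "p \<noteq> []" using dp by (simp add: dpath_def)
      fix k assume k: "Suc k < length p"
      have e: "(p ! k, p ! Suc k) \<in> E" using dp(1) k by (simp add: dpath_def)
      have ne: "(p ! k, p ! Suc k) \<noteq> (u, v)" using p(2) k unfolding uses_def by auto
      have "p ! k \<in> set (butlast p)" using k by (intro nth_in_butlast) simp
      then have fw: "p ! k \<noteq> w" using dp(4) by auto
      have "k < length p" using k by simp
      then have z1: "p ! k \<notin> Z" using nz nth_mem[of k p] by blast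
      have z2: "p ! Suc k \<notin> Z" using nz k nth_mem[of "Suc k" p] by blast
      show "(p ! k, p ! Suc k) \<in> R" unfolding R_def H_def using e ne fw z1 z2 by auto
    qed
    then show False using noconn dp by auto
  qed
  have "\<exists>P1\<in>L. uses P1"
  proof (rule ccontr)
    assume no: "\<not> (\<exists>P1\<in>L. uses P1)"
    then have hz: "\<forall>p\<in>L. set p \<inter> Z \<noteq> {}" using hitZ by blast
    define g where "g p = (SOME z. z \<in> set p \<inter> Z)" for p
    have g: "g p \<in> set p \<and> g p \<in> Z" if "p \<in> L" for p
    proof -
      have "\<exists>z. z \<in> set p \<inter> Z" using hz that by blast
      then have "g p \<in> set p \<inter> Z" unfolding g_def by (rule someI_ex)
      then show ?thesis by simp
    qed
    have "inj_on g L"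
    proof (rule inj_onI)
      fix p q assume pq: "p \<in> L" "q \<in> L" "g p = g q"
      show "p = q"
      proof (rule ccontr)
        assume "p \<noteq> q"
        then have "set p \<inter> set q \<subseteq> {r}" using L2 pq by blast
        then show False using g[OF pq(1)] g[OF pq(2)] pq(3) rZ by auto
      qed
    qed
    then have "card L \<le> card Z" using card_inj_on_le[of g L Z] g fZ by auto
    then show False using cL Z(3) by simp
  qed
  then obtain P1 where P1: "P1 \<in> L" "uses P1" by blast
  obtain i1 where i1: "Suc i1 < length P1" "P1 ! i1 = u" "P1 ! Suc i1 = v" using P1(2) unfolding uses_def by blast
  have dP1: "dpath V E P1" "hd P1 = r" "last P1 \<in> Y" "w \<notin> set (butlast P1)" using L1 P1(1) by auto
  have neP1: "P1 \<noteq> []" using dP1 by (simp add: dpath_def)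
  have P10: "P1 ! 0 = r" using dP1(2) neP1 by (simp add: hd_conv_nth)
  have P1u: "p = P1" if pu: "p \<in> L" "uses p" for p
  proof (rule ccontr)
    assume ne: "p \<noteq> P1"
    obtain i where i: "Suc i < length p" "p ! i = u" using pu(2) unfolding uses_def by blast
    have "u \<in> set p" using i nth_mem[of i p] by simp
    moreover have "u \<in> set P1" using i1 nth_mem[of i1 P1] by simp
    moreover have "set p \<inter> set P1 \<subseteq> {r}" using L2 pu(1) P1(1) ne by blast
    ultimately show False using ur by blast
  qed
  define L1' where "L1' = L - {P1}"
  have L1'L: "L1' \<subseteq> L" unfolding L1'_def by blast
  have hz1: "set p \<inter> Z \<noteq> {}" if "p \<in> L1'" for p
    using hitZ P1u that unfolding L1'_def by blast
  have disjP1: "set p \<inter> set P1 \<subseteq> {r}" if "p \<in> L1'" for p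
    using L2 that P1(1) unfolding L1'_def by blast
  define idx where "idx p = (LEAST i. i < length p \<and> p ! i \<in> Z)" for p
  have idx: "idx p < length p \<and> p ! idx p \<in> Z" if pL: "p \<in> L1'" for p
  proof -
    obtain z where z: "z \<in> set p" "z \<in> Z" using hz1[OF pL] by blast
    then obtain i where "i < length p" "p ! i = z" by (auto simp: in_set_conv_nth)
    then have "i < length p \<and> p ! i \<in> Z" using z by simp
    then show ?thesis unfolding idx_def by (rule LeastI)
  qed
  have idx_min: "p ! k \<notin> Z" if pk: "p \<in> L1'" "k < idx p" for p k
  proof -
    have kl: "k < (LEAST i. i < length p \<and> p ! i \<in> Z)" using pk(2) unfolding idx_def .
    have "\<not> (k < length p \<and> p ! k \<in> Z)" by (rule not_less_Least[OF kl])
    moreover have "k < length p" using idx[OF pk(1)] pk(2) by simp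
    ultimately show ?thesis by simp
  qed
  define phi where "phi p = p ! idx p" for p
  have phi: "phi p \<in> set p \<and> phi p \<in> Z" if "p \<in> L1'" for p
    using idx[OF that] nth_mem unfolding phi_def by blast
  have phi_inj: "inj_on phi L1'"
  proof (rule inj_onI)
    fix p q assume pq: "p \<in> L1'" "q \<in> L1'" "phi p = phi q"
    show "p = q"
    proof (rule ccontr)
      assume "p \<noteq> q"
      then have "set p \<inter> set q \<subseteq> {r}" using L2 pq L1'L by blast
      then show False using phi[OF pq(1)] phi[OF pq(2)] pq(3) rZ by auto
    qed
  qed
  have cL1: "card L1' = card L - 1" unfolding L1'_def using P1(1) fL by simp
  have phim: "phi ` L1' = Z"
  proof (rule card_seteq[OF fZ])
    show "phi ` L1' \<subseteq> Z" using phi by auto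
    show "card Z \<le> card (phi ` L1')" using card_image[OF phi_inj] cL1 cL Z(3) by simp
  qed
  have P1Z: "set P1 \<inter> Z = {}"
  proof -
    { fix z assume z: "z \<in> set P1" "z \<in> Z"
      then obtain p where p: "p \<in> L1'" "z = phi p" using phim by blast
      then have "z \<in> set p" using phi by blast
      then have "z = r" using disjP1[OF p(1)] z(1) by blast
      then have False using z(2) rZ by simp }
    then show ?thesis by blast
  qed
  have vP1: "v \<in> set P1" using i1 nth_mem[of "Suc i1" P1] by simp
  have vZ: "v \<notin> Z" using vP1 P1Z by blast
  have vr: "v \<noteq> r"
  proof
    assume "v = r"
    then have "P1 ! Suc i1 = P1 ! 0" using i1 P10 by simp
    moreover have "0 < length P1" using i1(1) by linarith
    ultimately have "Suc i1 = 0" using dpath_nth_inj[OF dP1(1), of "Suc i1" 0] i1(1) by blast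
    then show False by simp
  qed
  have vL1: "v \<notin> set p" if "p \<in> L1'" for p using disjP1[OF that] vP1 vr by blast
  define Q1 where "Q1 = take (Suc (Suc i1)) P1"
  define Qf where "Qf p = take (Suc (idx p)) p" for p
  define Ps where "Ps = insert Q1 (Qf ` L1')"
  define S where "S = insert v Z"
  have Q1len: "length Q1 = Suc (Suc i1)" unfolding Q1_def using i1 by simp
  have Q1last: "last Q1 = v" unfolding Q1_def using last_take_Suc[of "Suc i1" P1] i1 by simp
  have Q1: "dpath V E Q1 \<and> hd Q1 = r \<and> last Q1 \<in> S \<and> inner Q1 \<inter> S = {}"
  proof (intro conjI)
    show "dpath V E Q1" unfolding Q1_def by (rule dpath_take[OF dP1(1)]) simp
    show "hd Q1 = r" unfolding Q1_def using dP1(2) by simp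
    show "last Q1 \<in> S" using Q1last unfolding S_def by simp
    show "inner Q1 \<inter> S = {}"
    proof -
      { fix x assume x: "x \<in> inner Q1" "x \<in> S"
        obtain k where k: "0 < k" "k < Suc i1" "x = P1 ! k"
          using inner_take[of "Suc i1" P1 x] x(1) i1 unfolding Q1_def by auto
        have "k < length P1" using k(2) i1(1) by linarith
        then have "x \<notin> Z" using k(3) P1Z nth_mem[of k P1] by blast
        moreover have "x \<noteq> v"
        proof
          assume "x = v"
          then have "P1 ! k = P1 ! Suc i1" using k i1 by simp
          then show False using dpath_nth_inj[OF dP1(1), of k "Suc i1"] k i1 by simp
        qed
        ultimately have False using x(2) unfolding S_def by simp }
      then show ?thesis by blast
    qed
  qed
  have Qf: "dpath V E (Qf p) \<and> hd (Qf p) = r \<and> last (Qf p) \<in> S \<and> inner (Qf p) \<inter> S = {}"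
    if p: "p \<in> L1'" for p
  proof -
    have dp: "dpath V E p" "hd p = r" using L1 p L1'L by auto
    have ix: "idx p < length p" "p ! idx p \<in> Z" using idx[OF p] by auto
    show ?thesis
    proof (intro conjI)
      show "dpath V E (Qf p)" unfolding Qf_def by (rule dpath_take[OF dp(1)]) simp
      show "hd (Qf p) = r" unfolding Qf_def using dp(2) by simp
      show "last (Qf p) \<in> S" unfolding Qf_def S_def using last_take_Suc[of "idx p" p] ix by simp
      show "inner (Qf p) \<inter> S = {}"
      proof -
        { fix x assume x: "x \<in> inner (Qf p)" "x \<in> S"
          obtain k where k: "0 < k" "k < idx p" "x = p ! k"
            using inner_take[of "idx p" p x] x(1) ix unfolding Qf_def by auto
          have "x \<notin> Z" using idx_min[OF p k(2)] k(3) by simp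
          moreover have "x \<noteq> v" using vL1[OF p] k ix nth_mem[of k p] by auto
          ultimately have False using x(2) unfolding S_def by simp }
        then show ?thesis by blast
      qed
    qed
  qed
  have Q1sub: "set Q1 \<subseteq> set P1" unfolding Q1_def by (rule set_take_subset)
  have Qfsub: "set (Qf p) \<subseteq> set p" for p unfolding Qf_def by (rule set_take_subset)
  have rS: "rS_path_system V E r S Ps"
    unfolding rS_path_system_def
  proof (intro conjI)
    show "\<forall>p\<in>Ps. dpath V E p \<and> hd p = r \<and> last p \<in> S \<and> inner p \<inter> S = {}"
      unfolding Ps_def using Q1 Qf by blast
    show "\<forall>p\<in>Ps. \<forall>q\<in>Ps. p \<noteq> q \<longrightarrow> set p \<inter> set q \<subseteq> {r}"
    proof (intro ballI impI)
      fix p q assume pq: "p \<in> Ps" "q \<in> Ps" "p \<noteq> q"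
      have c1: "set Q1 \<inter> set (Qf p') \<subseteq> {r}" if "p' \<in> L1'" for p'
        using disjP1[OF that] Q1sub Qfsub[of p'] by blast
      have c2: "set (Qf p') \<inter> set (Qf p'') \<subseteq> {r}" if "p' \<in> L1'" "p'' \<in> L1'" "Qf p' \<noteq> Qf p''" for p' p''
      proof -
        have "p' \<noteq> p''" using that(3) by blast
        then have "set p' \<inter> set p'' \<subseteq> {r}" using L2 that(1,2) L1'L by blast
        then show ?thesis using Qfsub[of p'] Qfsub[of p''] by blast
      qed
      have co: "y = Q1 \<or> (\<exists>p'\<in>L1'. y = Qf p')" if "y \<in> Ps" for y
        using that unfolding Ps_def by blast
      show "set p \<inter> set q \<subseteq> {r}"
      proof (cases "p = Q1")
        case True
        then obtain b where b: "b \<in> L1'" "q = Qf b" using co[OF pq(2)] pq(3) by blast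
        then show ?thesis using c1[OF b(1)] True by simp
      next
        case False
        then obtain a where a: "a \<in> L1'" "p = Qf a" using co[OF pq(1)] by blast
        show ?thesis
        proof (cases "q = Q1")
          case True
          then show ?thesis using c1[OF a(1)] a(2) by blast
        next
          case False
          then obtain b where b: "b \<in> L1'" "q = Qf b" using co[OF pq(2)] by blast
          then show ?thesis using c2[OF a(1) b(1)] a(2) pq(3) by simp
        qed
      qed
    qed
  qed
  have lastPs: "last ` Ps = S"
  proof -
    have "last ` (Qf ` L1') = phi ` L1'"
    proof -
      have "last (Qf p) = phi p" if "p \<in> L1'" for p
        unfolding Qf_def phi_def using last_take_Suc[of "idx p" p] idx[OF that] by simp
      then show ?thesis by (simp add: image_image cong: image_cong)
    qed
    then show ?thesis unfolding Ps_def S_def using Q1last phim by simp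
  qed
  have sepx: "\<forall>x. (x, v) \<in> in_edges E v - {(u, v)} \<longrightarrow>
              (\<forall>p. dpath V E p \<and> hd p = r \<and> last p = x \<longrightarrow> set p \<inter> S \<noteq> {})"
  proof (intro allI impI)
    fix x p assume x: "(x, v) \<in> in_edges E v - {(u, v)}" and p: "dpath V E p \<and> hd p = r \<and> last p = x"
    show "set p \<inter> S \<noteq> {}"
    proof
      assume nS: "set p \<inter> S = {}"
      have xE: "(x, v) \<in> E" and xu: "x \<noteq> u" using x unfolding in_edges_def by auto
      have dp: "dpath V E p" and hp: "hd p = r" and lp: "last p = x" using p by auto
      have pne: "p \<noteq> []" using dp by (simp add: dpath_def)
      have p0: "p ! 0 = r" using hp pne by (simp add: hd_conv_nth)
      have vp: "v \<notin> set p" using nS unfolding S_def by blast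
      have pZ: "p ! k \<notin> Z" if "k < length p" for k using nS nth_mem[OF that] unfolding S_def by blast
      have eok: "(p ! k, p ! Suc k) \<in> R" if k: "Suc k < length p" "p ! k \<noteq> w" for k
      proof -
        have "(p ! k, p ! Suc k) \<in> E" using dp k(1) by (simp add: dpath_def)
        moreover have "p ! Suc k \<noteq> v" using vp nth_mem[OF k(1)] by blast
        moreover have "p ! k \<notin> Z" using pZ k(1) by simp
        moreover have "p ! Suc k \<notin> Z" using pZ k(1) by simp
        ultimately show ?thesis using k(2) unfolding R_def H_def by auto
      qed
      show False
      proof (cases "w \<in> set p")
        case False
        have "(hd p, last p) \<in> R\<^sup>*"
        proof (rule dpath_rtrancl[OF pne])
          fix k assume k: "Suc k < length p"
          have "p ! k \<noteq> w" using False nth_mem[of k p] k by auto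
          then show "(p ! k, p ! Suc k) \<in> R" using eok k by blast
        qed
        then have rx: "(r, x) \<in> R\<^sup>*" using hp lp by simp
        have xp: "x \<in> set p" using lp pne by auto
        have "(x, v) \<in> R"
        proof -
          have "x \<noteq> w" using xp False by blast
          moreover have "x \<notin> Z" using xp nS unfolding S_def by blast
          ultimately show ?thesis using xE xu vZ unfolding R_def H_def by auto
        qed
        moreover have "(P1 ! Suc i1, P1 ! (length P1 - 1)) \<in> R\<^sup>*"
        proof (rule chain_rtrancl)
          fix k assume k: "Suc i1 \<le> k" "Suc k \<le> length P1 - 1"
          have kl: "Suc k < length P1" using k by linarith
          have "(P1 ! k, P1 ! Suc k) \<in> E" using dP1(1) kl by (simp add: dpath_def)
          moreover have "P1 ! k \<noteq> u"
          proof
            assume "P1 ! k = u"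
            then have "P1 ! k = P1 ! i1" using i1 by simp
            then have "k = i1" using dpath_nth_inj[OF dP1(1), of k i1] kl i1(1) by linarith
            then show False using k(1) by simp
          qed
          moreover have "P1 ! k \<noteq> w"
          proof -
            have "k < length P1 - 1" using k by linarith
            then have "P1 ! k \<in> set (butlast P1)" by (rule nth_in_butlast)
            then show ?thesis using dP1(4) by blast
          qed
          moreover have "k < length P1" using kl by linarith
          then have "P1 ! k \<notin> Z" using P1Z nth_mem[of k P1] by blast
          moreover have "P1 ! Suc k \<notin> Z" using P1Z nth_mem[of "Suc k" P1] kl by blast
          ultimately show "(P1 ! k, P1 ! Suc k) \<in> R" unfolding R_def H_def by auto
        next
          show "Suc i1 \<le> length P1 - 1" using i1 by linarith
        qed
        ultimately have "(r, P1 ! (length P1 - 1)) \<in> R\<^sup>*" using rx i1(3)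
          by (meson rtrancl_into_rtrancl rtrancl_trans)
        then have "(r, last P1) \<in> R\<^sup>*" using neP1 by (simp add: last_conv_nth)
        then show False using noconn dP1(3) by blast
      next
        case True
        then obtain j where j: "j < length p" "p ! j = w" by (auto simp: in_set_conv_nth)
        have reach: "(p ! 0, p ! k) \<in> R\<^sup>*" if kj: "k \<le> j" for k
        proof (rule chain_rtrancl)
          fix m assume m: "0 \<le> m" "Suc m \<le> k"
          have ml: "Suc m < length p" using m kj j(1) by linarith
          have "p ! m \<noteq> w"
          proof
            assume "p ! m = w"
            then have "p ! m = p ! j" using j by simp
            then have "m = j" using dpath_nth_inj[OF dp, of m j] ml j(1) by linarith
            then show False using m kj by linarith
          qed
          then show "(p ! m, p ! Suc m) \<in> R" using eok ml by blast
        qed simp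
        show False
        proof (cases "w \<in> Y")
          case True
          then show False using reach[of j] j p0 noconn by auto
        next
          case False
          then have wc': "\<forall>y. (y, w) \<in> E \<longrightarrow> y \<in> Y" using wc by blast
          have j0: "j \<noteq> 0"
          proof
            assume "j = 0"
            then have "w = r" using j(2) p0 by simp
            then show False using wr by simp
          qed
          have "Suc (j - 1) < length p" using j0 j(1) by linarith
          then have "(p ! (j - 1), p ! Suc (j - 1)) \<in> E" using dp unfolding dpath_def by blast
          then have "(p ! (j - 1), w) \<in> E" using j0 j(2) by simp
          then have "p ! (j - 1) \<in> Y" using wc' by blast
          moreover have "(r, p ! (j - 1)) \<in> R\<^sup>*" using reach[of "j - 1"] p0 by simp
          ultimately show False using noconn by blast
        qed
      qed
    qed
  qed
  have fin: "\<exists>P\<in>Ps. 2 \<le> length P \<and> last_edge P = (u, v)"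
  proof -
    have "Q1 ! i1 = u" unfolding Q1_def using i1 by simp
    then have "last_edge Q1 = (u, v)" unfolding last_edge_def using Q1len Q1last by simp
    then show ?thesis using Q1len unfolding Ps_def by auto
  qed
  have SV: "S \<subseteq> V - {r}" unfolding S_def using Z(1) vr uvE EV by auto
  show ?thesis
    using SV rS lastPs sepx fin unfolding S_def by blast
qed

lemma rw_basic:
  assumes "dpath V E p" "hd p = r" "last p = w" "w \<noteq> r"
  shows "2 \<le> length p" "set (butlast p) = insert r (inner p)" "w \<notin> set (butlast p)"
    "last (butlast p) = fst (last_edge p)" "butlast p \<noteq> []" "dpath V E (butlast p)"
    "hd (butlast p) = r"
proof -
  have ne: "p \<noteq> []" using assms(1) by (simp add: dpath_def)
  have l2: "length p \<noteq> 1"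
  proof
    assume "length p = 1"
    then obtain a where "p = [a]" by (cases p) auto
    then show False using assms(2-4) by simp
  qed
  have "length p \<noteq> 0" using ne by simp
  then show len: "2 \<le> length p" using l2 by linarith
  obtain a xs where pa: "p = a # xs" using ne by (cases p) auto
  have xne: "xs \<noteq> []" using len pa by auto
  have ar: "a = r" using assms(2) pa by simp
  show "set (butlast p) = insert r (inner p)" unfolding inner_def using pa xne ar by simp
  have dist: "distinct p" using assms(1) by (simp add: dpath_def)
  have "p = butlast p @ [w]" using append_butlast_last_id[OF ne] assms(3) by simp
  then show "w \<notin> set (butlast p)" using dist by (metis distinct_append disjoint_iff list.set_intros(1))
  show bne: "butlast p \<noteq> []" using pa xne by simp
  have "last (butlast p) = butlast p ! (length (butlast p) - 1)" using bne by (rule last_conv_nth)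
  also have "\<dots> = p ! (length p - 2)" using len by (simp add: nth_butlast numeral_2_eq_2)
  finally show "last (butlast p) = fst (last_edge p)" unfolding last_edge_def by simp
  have "butlast p = take (length p - 1) p" by (simp add: butlast_conv_take)
  moreover have "0 < length p - 1" using len by simp
  ultimately show "dpath V E (butlast p)" using dpath_take[OF assms(1)] by simp
  show "hd (butlast p) = r" using pa xne ar by simp
qed

lemma bl_fam:
  assumes rws: "rw_path_system V E r w Ps" and wr: "w \<noteq> r"
  defines "L0 \<equiv> butlast ` {p \<in> Ps. fst (last_edge p) \<noteq> r}"
  shows "\<forall>q\<in>L0. dpath V E q \<and> hd q = r \<and> w \<notin> set q"
    and "\<forall>p\<in>L0. \<forall>q\<in>L0. p \<noteq> q \<longrightarrow> set p \<inter> set q \<subseteq> {r}"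
    and "last ` L0 = fst ` last_edge ` Ps - {r}"
proof -
  have P: "\<forall>p\<in>Ps. dpath V E p \<and> hd p = r \<and> last p = w" and D: "\<forall>p\<in>Ps. \<forall>q\<in>Ps. p \<noteq> q \<longrightarrow> inner p \<inter> inner q = {}"
    using rws unfolding rw_path_system_def by auto
  have rb: "2 \<le> length p \<and> set (butlast p) = insert r (inner p) \<and> w \<notin> set (butlast p) \<and>
    last (butlast p) = fst (last_edge p) \<and> butlast p \<noteq> [] \<and> dpath V E (butlast p) \<and>
    hd (butlast p) = r" if "p \<in> Ps" for p
  proof -
    have a: "dpath V E p" "hd p = r" "last p = w" using P that by auto
    show ?thesis using rw_basic[OF a wr] by simp
  qed
  show "\<forall>q\<in>L0. dpath V E q \<and> hd q = r \<and> w \<notin> set q"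
  proof
    fix q assume "q \<in> L0"
    then obtain p where "p \<in> Ps" "q = butlast p" unfolding L0_def by blast
    then show "dpath V E q \<and> hd q = r \<and> w \<notin> set q" using rb by blast
  qed
  show "\<forall>p\<in>L0. \<forall>q\<in>L0. p \<noteq> q \<longrightarrow> set p \<inter> set q \<subseteq> {r}"
  proof (intro ballI impI)
    fix p' q' assume pq: "p' \<in> L0" "q' \<in> L0" "p' \<noteq> q'"
    then obtain p q where p: "p \<in> Ps" "p' = butlast p" and q: "q \<in> Ps" "q' = butlast q"
      unfolding L0_def by blast
    have "p \<noteq> q" using pq(3) p q by blast
    then have "inner p \<inter> inner q = {}" using D p q by blast
    moreover have "set p' = insert r (inner p)" using rb[OF p(1)] p(2) by simp
    moreover have "set q' = insert r (inner q)" using rb[OF q(1)] q(2) by simp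
    ultimately show "set p' \<inter> set q' \<subseteq> {r}" by blast
  qed
  have lb: "last (butlast p) = fst (last_edge p)" if "p \<in> Ps" for p
    using rb[OF that] by simp
  show "last ` L0 = fst ` last_edge ` Ps - {r}"
  proof
    show "last ` L0 \<subseteq> fst ` last_edge ` Ps - {r}"
    proof
      fix z assume "z \<in> last ` L0"
      then obtain p where p: "p \<in> Ps" "fst (last_edge p) \<noteq> r" "z = last (butlast p)"
        unfolding L0_def by blast
      then show "z \<in> fst ` last_edge ` Ps - {r}" using lb[OF p(1)] by simp
    qed
  next
    show "fst ` last_edge ` Ps - {r} \<subseteq> last ` L0"
    proof
      fix z assume "z \<in> fst ` last_edge ` Ps - {r}"
      then obtain p where p: "p \<in> Ps" "z = fst (last_edge p)" "z \<noteq> r" by blast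
      then have "butlast p \<in> L0" unfolding L0_def by blast
      moreover have "z = last (butlast p)" using lb[OF p(1)] p(2) by simp
      ultimately show "z \<in> last ` L0" by blast
    qed
  qed
qed

theorem lemma4p10:
  fixes V :: "'a set" and E :: "('a \<times> 'a) set" and r w u v :: 'a
  assumes "digraph V E" and "r \<in> V" and "w \<in> V" and "w \<noteq> r"
    and "I \<in> Gset V E r w"
    and "\<forall>f \<in> in_edges E w - I. insert f I \<in> Gset V E r w"
    and "(u, v) \<in> E" and "u \<noteq> r" and "v \<noteq> w"
    and "I \<notin> Gset V (E - {(u, v)}) r w"
  shows "\<exists>S Ps. S \<subseteq> V - {r} \<and> v \<in> S \<and> rS_path_system V E r S Ps \<and> last ` Ps = S \<and>
           (\<forall>x. (x, v) \<in> in_edges E v - {(u, v)} \<longrightarrow>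
              (\<forall>p. dpath V E p \<and> hd p = r \<and> last p = x \<longrightarrow> set p \<inter> S \<noteq> {})) \<and>
           (\<exists>P\<in>Ps. 2 \<le> length P \<and> last_edge P = (u, v))"
proof -
  note dg = assms(1) and rV = assms(2) and wV = assms(3) and wr = assms(4)
    and uvE = assms(7) and ur = assms(8) and vw = assms(9) and notG = assms(10)
  have IE: "I \<subseteq> in_edges E w" using assms(5) unfolding Gset_def by blast
  define T where "T = fst ` I - {r}"
  show ?thesis
  proof (cases "\<exists>f\<in>in_edges E w. insert f I \<in> Gset V E r w \<and> (f \<in> I \<longrightarrow> fst f = r)")
    case True
    then obtain f where f: "f \<in> in_edges E w" "insert f I \<in> Gset V E r w" "f \<in> I \<longrightarrow> fst f = r" by blast
    obtain PsJ where PsJ: "rw_path_system V E r w PsJ" "last_edge ` PsJ = insert f I"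
      using f(2) unfolding Gset_def by blast
    have PJ: "\<forall>p\<in>PsJ. dpath V E p \<and> hd p = r \<and> last p = w"
      and DJ: "\<forall>p\<in>PsJ. \<forall>q\<in>PsJ. p \<noteq> q \<longrightarrow> inner p \<inter> inner q = {}"
      using PsJ(1) unfolding rw_path_system_def by auto
    have "f \<in> last_edge ` PsJ" using PsJ(2) by simp
    then obtain pf where pf: "pf \<in> PsJ" "last_edge pf = f" by auto
    have dpf: "dpath V E pf" "hd pf = r" "last pf = w" using PJ pf(1) by auto
    note rbf = rw_basic[OF dpf wr]
    define PsJ' where "PsJ' = PsJ - {pf}"
    have rws': "rw_path_system V E r w PsJ'"
      using PsJ(1) unfolding rw_path_system_def PsJ'_def by blast
    define L0 where "L0 = butlast ` {p \<in> PsJ'. fst (last_edge p) \<noteq> r}"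
    have B1: "\<forall>q\<in>L0. dpath V E q \<and> hd q = r \<and> w \<notin> set q"
      and B2: "\<forall>p\<in>L0. \<forall>q\<in>L0. p \<noteq> q \<longrightarrow> set p \<inter> set q \<subseteq> {r}"
      and B3: "last ` L0 = fst ` last_edge ` PsJ' - {r}"
      using bl_fam[OF rws' wr] unfolding L0_def by auto
    have nof: "last_edge p \<noteq> f" if "p \<in> PsJ'" "fst f \<noteq> r" for p
    proof
      assume pe: "last_edge p = f"
      have pJ: "p \<in> PsJ" "p \<noteq> pf" using that(1) unfolding PsJ'_def by auto
      have dp: "dpath V E p" "hd p = r" "last p = w" using PJ pJ(1) by auto
      note rbp = rw_basic[OF dp wr]
      have "fst f \<in> set (butlast p)" using rbp(4,5) pe by (metis last_in_set)
      then have "fst f \<in> inner p" using rbp(2) that(2) by simp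
      moreover have "fst f \<in> set (butlast pf)" using rbf(4,5) pf(2) by (metis last_in_set)
      then have "fst f \<in> inner pf" using rbf(2) that(2) by simp
      ultimately show False using DJ pJ pf(1) by blast
    qed
    have B3': "fst ` last_edge ` PsJ' - {r} = T"
    proof
      show "fst ` last_edge ` PsJ' - {r} \<subseteq> T"
      proof
        fix z assume "z \<in> fst ` last_edge ` PsJ' - {r}"
        then obtain p where p: "p \<in> PsJ'" "z = fst (last_edge p)" "z \<noteq> r" by blast
        have "last_edge p \<in> insert f I" using PsJ(2) p(1) unfolding PsJ'_def by blast
        moreover have "last_edge p \<noteq> f"
        proof
          assume "last_edge p = f"
          then show False using nof[OF p(1)] p(2,3) by simp
        qed
        ultimately have "last_edge p \<in> I" by blast
        then show "z \<in> T" unfolding T_def using p by blast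
      qed
    next
      show "T \<subseteq> fst ` last_edge ` PsJ' - {r}"
      proof
        fix z assume "z \<in> T"
        then obtain g where g: "g \<in> I" "z = fst g" "z \<noteq> r" unfolding T_def by blast
        then obtain p where p: "p \<in> PsJ" "last_edge p = g" using PsJ(2) by (metis imageE insertCI)
        have "p \<noteq> pf"
        proof
          assume "p = pf"
          then have "g = f" using p pf by simp
          then show False using f(3) g by simp
        qed
        then have "p \<in> PsJ'" unfolding PsJ'_def using p by blast
        then show "z \<in> fst ` last_edge ` PsJ' - {r}" using g p by blast
      qed
    qed
    define L where "L = insert pf L0"
    define Y where "Y = insert w T"
    have L1: "\<forall>p\<in>L. dpath V E p \<and> hd p = r \<and> last p \<in> Y \<and> w \<notin> set (butlast p)"
    proof
      fix p assume "p \<in> L"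
      then consider "p = pf" | "p \<in> L0" unfolding L_def by blast
      then show "dpath V E p \<and> hd p = r \<and> last p \<in> Y \<and> w \<notin> set (butlast p)"
      proof cases
        case 1 then show ?thesis using dpf rbf(3) unfolding Y_def by simp
      next
        case 2
        have "last p \<in> T" using B3 B3' 2 by blast
        moreover have "w \<notin> set (butlast p)" using B1 2 in_set_butlastD by fastforce
        ultimately show ?thesis using B1 2 unfolding Y_def by blast
      qed
    qed
    have L2: "\<forall>p\<in>L. \<forall>q\<in>L. p \<noteq> q \<longrightarrow> set p \<inter> set q \<subseteq> {r}"
    proof -
      have c: "set pf \<inter> set q \<subseteq> {r}" if qL: "q \<in> L0" for q
      proof -
        obtain p where p: "p \<in> PsJ'" "q = butlast p" using qL unfolding L0_def by blast
        have pJ: "p \<in> PsJ" "p \<noteq> pf" using p(1) unfolding PsJ'_def by auto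
        have dp: "dpath V E p" "hd p = r" "last p = w" using PJ pJ(1) by auto
        note rbp = rw_basic[OF dp wr]
        have pfne: "pf \<noteq> []" using dpf(1) by (simp add: dpath_def)
        have "set pf = insert (last pf) (set (butlast pf))" by (rule set_butlast_last[OF pfne])
        then have spf: "set pf = insert w (insert r (inner pf))" using rbf(2) dpf(3) by simp
        have sq: "set q = insert r (inner p)" using rbp(2) p(2) by simp
        have wq: "w \<notin> set q" using rbp(3) p(2) by simp
        have dj: "inner p \<inter> inner pf = {}" using DJ pJ pf(1) by blast
        show ?thesis
        proof
          fix z assume z: "z \<in> set pf \<inter> set q"
          then have "z \<noteq> w" using wq by blast
          then have "z = r \<or> z \<in> inner pf" using z spf by blast
          moreover have "z = r \<or> z \<in> inner p" using z sq by blast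
          ultimately show "z \<in> {r}" using dj by blast
        qed
      qed
      show ?thesis
      proof (intro ballI impI)
        fix p q assume pq: "p \<in> L" "q \<in> L" "p \<noteq> q"
        show "set p \<inter> set q \<subseteq> {r}"
        proof (cases "p = pf")
          case True
          then have "q \<in> L0" using pq unfolding L_def by blast
          then show ?thesis using c True by blast
        next
          case pnf: False
          then have pL0: "p \<in> L0" using pq(1) unfolding L_def by blast
          show ?thesis
          proof (cases "q = pf")
            case True
            then show ?thesis using c[OF pL0] by blast
          next
            case False
            then have "q \<in> L0" using pq(2) unfolding L_def by blast
            then show ?thesis using B2 pL0 pq(3) by blast
          qed
        qed
      qed
    qed
    have L3: "last ` L = Y" unfolding L_def Y_def using B3 B3' dpf(3) by simp
    show ?thesis
    proof (rule core[OF dg rV wV wr uvE ur vw IE notG T_def _ _ _ L1 L2 L3])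
      show "T \<subseteq> Y" "Y \<subseteq> insert w T" unfolding Y_def by auto
      show "w \<in> Y \<or> (\<forall>y. (y, w) \<in> E \<longrightarrow> y \<in> Y)" unfolding Y_def by simp
    qed
  next
    case False
    have rwE: "(r, w) \<notin> E"
    proof
      assume rw: "(r, w) \<in> E"
      then have fin: "(r, w) \<in> in_edges E w" unfolding in_edges_def by simp
      have "insert (r, w) I \<in> Gset V E r w"
      proof (cases "(r, w) \<in> I")
        case True then show ?thesis using assms(5) by (simp add: insert_absorb)
      next
        case False then show ?thesis using assms(6) fin by blast
      qed
      then show False using False fin by auto
    qed
    have inI: "in_edges E w \<subseteq> I"
    proof
      fix f assume f: "f \<in> in_edges E w"
      show "f \<in> I"
      proof (rule ccontr)
        assume "f \<notin> I"
        then have "insert f I \<in> Gset V E r w" using assms(6) f by blast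
        then show False using False f \<open>f \<notin> I\<close> by blast
      qed
    qed
    obtain Ps0 where Ps0: "rw_path_system V E r w Ps0" "last_edge ` Ps0 = I"
      using assms(5) unfolding Gset_def by blast
    define L where "L = butlast ` {p \<in> Ps0. fst (last_edge p) \<noteq> r}"
    have B1: "\<forall>q\<in>L. dpath V E q \<and> hd q = r \<and> w \<notin> set q"
      and B2: "\<forall>p\<in>L. \<forall>q\<in>L. p \<noteq> q \<longrightarrow> set p \<inter> set q \<subseteq> {r}"
      and B3: "last ` L = fst ` last_edge ` Ps0 - {r}"
      using bl_fam[OF Ps0(1) wr] unfolding L_def by auto
    have L3: "last ` L = T" using B3 Ps0(2) unfolding T_def by simp
    have L1: "\<forall>p\<in>L. dpath V E p \<and> hd p = r \<and> last p \<in> T \<and> w \<notin> set (butlast p)"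
    proof
      fix p assume p: "p \<in> L"
      have "last p \<in> T" using L3 p by blast
      moreover have "w \<notin> set (butlast p)" using B1 p in_set_butlastD by fastforce
      ultimately show "dpath V E p \<and> hd p = r \<and> last p \<in> T \<and> w \<notin> set (butlast p)" using B1 p by blast
    qed
    show ?thesis
    proof (rule core[OF dg rV wV wr uvE ur vw IE notG T_def _ _ _ L1 B2 L3])
      show "T \<subseteq> T" "T \<subseteq> insert w T" by auto
      show "w \<in> T \<or> (\<forall>y. (y, w) \<in> E \<longrightarrow> y \<in> T)"
      proof (rule disjI2, intro allI impI)
        fix y assume y: "(y, w) \<in> E"
        then have "(y, w) \<in> I" using inI unfolding in_edges_def by auto
        moreover have "y \<noteq> r" using y rwE by auto
        ultimately show "y \<in> T" unfolding T_def by force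
      qed
    qed
  qed
qed

end
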